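(* Let $A\in\mathbb{R}_{\max}^{n\times n}$ with $\lambda(A)\ne-\infty$, $g=g(\mathrm{crit}(A))$, and let $A_1,B_1,A_2$ be built from $A$ and $g$. Assume that $A_2<CSR[A_1]$, that $\mathrm{crit}(A)$ is strongly connected and contains the cycle $(1,2,\dots,g,1)$, that $g$ and $n$ are coprime, and that $(j-i-1)\lambda(A)+(B_1)_{ij}<(A_1^{\,j-i})_{ij}$ whenever $i>g$, $j>i+1$ and $j\equiv i+1\pmod g$. Then $CS^tR[A_1]=CS^tR[A_1\oplus B_1]$ for all $t\ge1$.
   Context: Max-plus semiring $\mathbb{R}_{\max}=\mathbb{R}\cup\{-\infty\}$ with $a\oplus b=\max(a,b)$, $a\otimes b=a+b$; $(A\oplus B)_{ij}=\max(a_{ij},b_{ij})$, $(AB)_{ij}=\max_k(a_{ik}+b_{kj})$; $A^t$ is the $t$-th max-plus power, $A^0=I$. $\mathcal{D}(A)$ is the digraph on $\{1,\dots,n\}$ with arc $(i,j)$ of weight $a_{ij}$ whenever $a_{ij}\ne-\infty$; walks, length (number of arcs), weight (sum of arc weights), cycles as usual. $\lambda(A)$ is the maximal cycle mean ($-\infty$ if no cycle). $\mathrm{crit}(A)$ is the subgraph of all nodes and arcs of cycles attaining $\lambda(A)$; its nodes are critical. $g(\mathrm{crit}(A))$ is the maximum over strongly connected components of $\mathrm{crit}(A)$ of their minimal cycle length. The cyclicity of $\mathrm{crit}(A)$ is the lcm over components of the gcd of their cycle lengths. CSR terms: if $\lambda=\lambda(A)\ne-\infty$, with $\gamma$ the cyclicity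 of $\mathrm{crit}(A)$, $A_\lambda$ equal to $A$ with $\lambda$ subtracted from every finite entry, $M=I\oplus N\oplus\dots\oplus N^{n-1}$ where $N=A_\lambda^\gamma$: $c_{ij}=m_{ij}$ if $j$ critical, else $-\infty$; $r_{ij}=m_{ij}$ if $i$ critical, else $-\infty$; $s_{ij}=a_{ij}$ if $(i,j)$ is an arc of $\mathrm{crit}(A)$, else $-\infty$; $CS^tR[A]$ is the product $CS^tR$ and $CSR[A]=CS^1R[A]$. If $\lambda(A)=-\infty$, $CS^tR[A]$ is the all-$(-\infty)$ matrix. Strict order: for matrices or scalars, $X<Y$ means $x_{ij}\le y_{ij}$ for all $i,j$, with $x_{ij}=y_{ij}$ only if both equal $-\infty$. Given $A$ and $g$: $(A_1)_{ij}=a_{ij}$ if ($j=i+1$ and $1\le i\le n-1$) or $(i,j)\in\{(n,1),(g,1)\}$, and $-\infty$ otherwise; $(B_1)_{ij}=a_{ij}$ if $i>g$, $j>g$ and $j\equiv i+1\pmod g$, and $-\infty$ otherwise; $(A_2)_{ij}=-\infty$ if $(A_1\oplus B_1)_{ij}>-\infty$, and $a_{ij}$ otherwise. *)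

theory Defs
  imports "HOL-Library.Extended_Real"
begin

text \<open>Max-plus matrices of size n are functions nat \<Rightarrow> nat \<Rightarrow> ereal, only the
  entries with indices in {1..n} are relevant; -\<infinity> is the max-plus zero.\<close>

type_synonym mpmat = "nat \<Rightarrow> nat \<Rightarrow> ereal"

definition mp_one :: mpmat where
  "mp_one i j = (if i = j then 0 else -\<infinity>)"

definition mp_mult :: "nat \<Rightarrow> mpmat \<Rightarrow> mpmat \<Rightarrow> mpmat" where
  "mp_mult n A B i j = (SUP k\<in>{1..n}. A i k + B k j)"

definition mp_add :: "mpmat \<Rightarrow> mpmat \<Rightarrow> mpmat" where
  "mp_add A B i j = max (A i j) (B i j)"

fun mp_pow :: "nat \<Rightarrow> mpmat \<Rightarrow> nat \<Rightarrow> mpmat" where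
  "mp_pow n A 0 = mp_one"
| "mp_pow n A (Suc t) = mp_mult n (mp_pow n A t) A"

definition sless :: "ereal \<Rightarrow> ereal \<Rightarrow> bool" where
  "sless x y \<longleftrightarrow> x \<le> y \<and> (x = y \<longrightarrow> x = -\<infinity>)"

definition mp_sless :: "nat \<Rightarrow> mpmat \<Rightarrow> mpmat \<Rightarrow> bool" where
  "mp_sless n X Y \<longleftrightarrow> (\<forall>i\<in>{1..n}. \<forall>j\<in>{1..n}. sless (X i j) (Y i j))"

definition is_walk :: "nat \<Rightarrow> mpmat \<Rightarrow> nat list \<Rightarrow> bool" where
  "is_walk n A w \<longleftrightarrow> length w \<ge> 2 \<and> set w \<subseteq> {1..n} \<and>
     (\<forall>l < length w - 1. A (w ! l) (w ! Suc l) \<noteq> -\<infinity>)"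

definition wlen :: "nat list \<Rightarrow> nat" where
  "wlen w = length w - 1"

definition wweight :: "mpmat \<Rightarrow> nat list \<Rightarrow> ereal" where
  "wweight A w = (\<Sum>l<wlen w. A (w ! l) (w ! Suc l))"

definition is_cycle :: "nat \<Rightarrow> mpmat \<Rightarrow> nat list \<Rightarrow> bool" where
  "is_cycle n A c \<longleftrightarrow> is_walk n A c \<and> hd c = last c \<and> distinct (butlast c)"

definition cmean :: "mpmat \<Rightarrow> nat list \<Rightarrow> ereal" where
  "cmean A c = wweight A c / ereal (real (wlen c))"

definition mcm :: "nat \<Rightarrow> mpmat \<Rightarrow> ereal" where
  "mcm n A = Sup {cmean A c | c. is_cycle n A c}"

definition is_crit_cycle :: "nat \<Rightarrow> mpmat \<Rightarrow> nat list \<Rightarrow> bool" where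
  "is_crit_cycle n A c \<longleftrightarrow> is_cycle n A c \<and> cmean A c = mcm n A"

definition crit_arc :: "nat \<Rightarrow> mpmat \<Rightarrow> nat \<Rightarrow> nat \<Rightarrow> bool" where
  "crit_arc n A i j \<longleftrightarrow>
     (\<exists>c. is_crit_cycle n A c \<and> (\<exists>l < wlen c. c ! l = i \<and> c ! Suc l = j))"

definition crit_node :: "nat \<Rightarrow> mpmat \<Rightarrow> nat \<Rightarrow> bool" where
  "crit_node n A i \<longleftrightarrow> (\<exists>c. is_crit_cycle n A c \<and> i \<in> set c)"

definition crit_rel :: "nat \<Rightarrow> mpmat \<Rightarrow> (nat \<times> nat) set" where
  "crit_rel n A = {(i, j). crit_arc n A i j}"

definition crit_strongly_connected :: "nat \<Rightarrow> mpmat \<Rightarrow> bool" where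
  "crit_strongly_connected n A \<longleftrightarrow>
     (\<forall>i j. crit_node n A i \<longrightarrow> crit_node n A j \<longrightarrow> (i, j) \<in> (crit_rel n A)\<^sup>*)"

definition crit_comp :: "nat \<Rightarrow> mpmat \<Rightarrow> nat \<Rightarrow> nat set" where
  "crit_comp n A i = {j. crit_node n A j \<and> (i, j) \<in> (crit_rel n A)\<^sup>* \<and> (j, i) \<in> (crit_rel n A)\<^sup>*}"

definition crit_comps :: "nat \<Rightarrow> mpmat \<Rightarrow> nat set set" where
  "crit_comps n A = {crit_comp n A i | i. crit_node n A i}"

definition comp_cycle_lens :: "nat \<Rightarrow> mpmat \<Rightarrow> nat set \<Rightarrow> nat set" where
  "comp_cycle_lens n A C = {wlen c | c. is_cycle n A c \<and> set c \<subseteq> C \<and>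
      (\<forall>l < wlen c. crit_arc n A (c ! l) (c ! Suc l))}"

definition g_crit :: "nat \<Rightarrow> mpmat \<Rightarrow> nat" where
  "g_crit n A = Max ((\<lambda>C. Min (comp_cycle_lens n A C)) ` crit_comps n A)"

definition cyclicity_crit :: "nat \<Rightarrow> mpmat \<Rightarrow> nat" where
  "cyclicity_crit n A = Lcm ((\<lambda>C. Gcd (comp_cycle_lens n A C)) ` crit_comps n A)"

definition A_lam :: "nat \<Rightarrow> mpmat \<Rightarrow> mpmat" where
  "A_lam n A i j = A i j - mcm n A"

definition M_mat :: "nat \<Rightarrow> mpmat \<Rightarrow> mpmat" where
  "M_mat n A i j = (SUP k\<in>{..<n}. mp_pow n (mp_pow n (A_lam n A) (cyclicity_crit n A)) k i j)"

definition C_mat :: "nat \<Rightarrow> mpmat \<Rightarrow> mpmat" where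
  "C_mat n A i j = (if crit_node n A j then M_mat n A i j else -\<infinity>)"

definition R_mat :: "nat \<Rightarrow> mpmat \<Rightarrow> mpmat" where
  "R_mat n A i j = (if crit_node n A i then M_mat n A i j else -\<infinity>)"

definition S_mat :: "nat \<Rightarrow> mpmat \<Rightarrow> mpmat" where
  "S_mat n A i j = (if crit_arc n A i j then A i j else -\<infinity>)"

definition CSR :: "nat \<Rightarrow> mpmat \<Rightarrow> nat \<Rightarrow> mpmat" where
  "CSR n A t = (if mcm n A = -\<infinity> then (\<lambda>i j. -\<infinity>)
     else mp_mult n (mp_mult n (C_mat n A) (mp_pow n (S_mat n A) t)) (R_mat n A))"

definition A1_mat :: "nat \<Rightarrow> nat \<Rightarrow> mpmat \<Rightarrow> mpmat" where
  "A1_mat n g A i j = (if (j = i + 1 \<and> 1 \<le> i \<and> i \<le> n - 1) \<or> (i, j) = (n, 1) \<or> (i, j) = (g, 1)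
                       then A i j else -\<infinity>)"

definition B1_mat :: "nat \<Rightarrow> mpmat \<Rightarrow> mpmat" where
  "B1_mat g A i j = (if i > g \<and> j > g \<and> j mod g = (i + 1) mod g then A i j else -\<infinity>)"

definition A2_mat :: "nat \<Rightarrow> nat \<Rightarrow> mpmat \<Rightarrow> mpmat" where
  "A2_mat n g A i j = (if mp_add (A1_mat n g A) (B1_mat g A) i j > -\<infinity> then -\<infinity> else A i j)"

end

theory Submission
  imports Defs
begin

lemma SUP_fin_attain:
  fixes F :: "'b \<Rightarrow> 'a::complete_linorder"
  assumes "finite S" "S \<noteq> {}"
  shows "\<exists>x\<in>S. (SUP y\<in>S. F y) = F x"
proof -
  have "(SUP y\<in>S. F y) = Max (F ` S)" using assms by (simp add: cSup_eq_Max)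
  moreover have "Max (F ` S) \<in> F ` S" using assms by simp
  ultimately show ?thesis by auto
qed

lemma SUP_fin_ninf:
  fixes F :: "'b \<Rightarrow> ereal"
  assumes "finite S" "\<forall>x\<in>S. F x \<noteq> \<infinity>"
  shows "(SUP y\<in>S. F y) \<noteq> \<infinity>"
proof (cases "S = {}")
  case True thus ?thesis by (simp add: bot_ereal_def)
next
  case False thus ?thesis using SUP_fin_attain[OF assms(1) False, of F] assms(2) by auto
qed

lemma ereal_approx_le:
  fixes x :: ereal
  assumes "x \<noteq> \<infinity>" "\<And>c. ereal c \<le> x \<Longrightarrow> c \<le> d"
  shows "x \<le> ereal d"
  using assms by (cases x) auto

lemma ereal_approx_le2:
  fixes x y :: ereal
  assumes "x \<noteq> \<infinity>" "\<And>c. ereal c \<le> x \<Longrightarrow> ereal c \<le> y"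
  shows "x \<le> y"
  using assms by (cases x) auto

lemma ereal_le_fin:
  fixes x :: ereal
  assumes "x \<noteq> \<infinity>" "ereal c \<le> x"
  shows "\<exists>r. x = ereal r \<and> c \<le> r"
  using assms by (cases x) auto

lemma ereal_le_sum_fin:
  fixes x y :: ereal
  assumes "x \<noteq> \<infinity>" "y \<noteq> \<infinity>" "ereal c \<le> x + y"
  shows "\<exists>u v. x = ereal u \<and> y = ereal v \<and> c \<le> u + v"
  using assms by (cases x; cases y) auto

definition vw :: "nat \<Rightarrow> mpmat \<Rightarrow> (nat \<Rightarrow> nat) \<Rightarrow> nat \<Rightarrow> bool" where
  "vw n P f L \<longleftrightarrow> (\<forall>k\<le>L. f k \<in> {1..n}) \<and> (\<forall>k<L. P (f k) (f (Suc k)) \<noteq> -\<infinity>)"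

definition ws :: "mpmat \<Rightarrow> (nat \<Rightarrow> nat) \<Rightarrow> nat \<Rightarrow> real" where
  "ws P f L = (\<Sum>k<L. real_of_ereal (P (f k) (f (Suc k))))"

definition cat :: "(nat \<Rightarrow> nat) \<Rightarrow> nat \<Rightarrow> (nat \<Rightarrow> nat) \<Rightarrow> nat \<Rightarrow> nat" where
  "cat f L h = (\<lambda>k. if k \<le> L then f k else h (k - L))"

definition sh :: "(nat \<Rightarrow> nat) \<Rightarrow> nat \<Rightarrow> nat \<Rightarrow> nat" where
  "sh f p = (\<lambda>k. f (k + p))"

lemma ws_0[simp]: "ws P f 0 = 0" by (simp add: ws_def)
lemma ws_Suc: "ws P f (Suc L) = ws P f L + real_of_ereal (P (f L) (f (Suc L)))"
  by (simp add: ws_def)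

lemma ws_cong: "(\<And>k. k \<le> L \<Longrightarrow> f k = h k) \<Longrightarrow> ws P f L = ws P h L"
  unfolding ws_def by (intro sum.cong) auto

lemma vw_cong: "(\<And>k. k \<le> L \<Longrightarrow> f k = h k) \<Longrightarrow> vw n P f L = vw n P h L"
  unfolding vw_def by (metis Suc_leI less_imp_le_nat)

lemma vw_Suc: "vw n P f (Suc L) \<longleftrightarrow> vw n P f L \<and> f (Suc L) \<in> {1..n} \<and> P (f L) (f (Suc L)) \<noteq> -\<infinity>"
  unfolding vw_def by (auto simp: less_Suc_eq le_Suc_eq)

lemma vw_0: "vw n P f 0 \<longleftrightarrow> f 0 \<in> {1..n}"
  unfolding vw_def by auto

lemma vw_le: "vw n P f L \<Longrightarrow> L' \<le> L \<Longrightarrow> vw n P f L'"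
  unfolding vw_def by auto

lemma cat_0[simp]: "cat f L h 0 = f 0" by (simp add: cat_def)
lemma cat_low: "k \<le> L \<Longrightarrow> cat f L h k = f k" by (simp add: cat_def)
lemma cat_high: "f L = h 0 \<Longrightarrow> cat f L h (L + k) = h k" by (simp add: cat_def)
lemma cat_end: "f L = h 0 \<Longrightarrow> cat f L h (L + L2) = h L2" by (simp add: cat_def)

lemma sh_simp[simp]: "sh f p k = f (k + p)" by (simp add: sh_def)

lemma ws_split: "p \<le> L \<Longrightarrow> ws P f L = ws P f p + ws P (sh f p) (L - p)"
proof (induction L)
  case 0 thus ?case by simp
next
  case (Suc L)
  show ?case
  proof (cases "p = Suc L")
    case True thus ?thesis by simp
  next
    case False
    hence "p \<le> L" using Suc by simp
    hence "Suc L - p = Suc (L - p)" by simp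
    moreover have "L - p + p = L" using \<open>p \<le> L\<close> by simp
    ultimately show ?thesis using Suc.IH[OF \<open>p \<le> L\<close>] by (simp add: ws_Suc)
  qed
qed

lemma vw_sh: "vw n P f L \<Longrightarrow> p \<le> L \<Longrightarrow> vw n P (sh f p) (L - p)"
  unfolding vw_def by auto

lemma ws_cat: "f L1 = h 0 \<Longrightarrow> ws P (cat f L1 h) (L1 + L2) = ws P f L1 + ws P h L2"
proof -
  assume e: "f L1 = h 0"
  have "ws P (cat f L1 h) (L1 + L2) = ws P (cat f L1 h) L1 + ws P (sh (cat f L1 h) L1) L2"
    using ws_split[of L1 "L1+L2" P "cat f L1 h"] by simp
  moreover have "ws P (cat f L1 h) L1 = ws P f L1" by (rule ws_cong) (simp add: cat_low)
  moreover have "ws P (sh (cat f L1 h) L1) L2 = ws P h L2"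
    by (rule ws_cong) (metis sh_simp add.commute cat_high[of f L1 h, OF e])
  ultimately show ?thesis by simp
qed

lemma vw_cat: "vw n P f L1 \<Longrightarrow> vw n P h L2 \<Longrightarrow> f L1 = h 0 \<Longrightarrow> vw n P (cat f L1 h) (L1 + L2)"
  unfolding vw_def
proof safe
  fix k assume a: "\<forall>k\<le>L1. f k \<in> {1..n}" "\<forall>k<L1. P (f k) (f (Suc k)) \<noteq> -\<infinity>"
     "\<forall>k\<le>L2. h k \<in> {1..n}" "\<forall>k<L2. P (h k) (h (Suc k)) \<noteq> -\<infinity>" "f L1 = h 0"
  { assume "k \<le> L1 + L2"
    thus "cat f L1 h k \<in> {1..n}" using a by (cases "k \<le> L1") (auto simp: cat_def) }
  { assume "k < L1 + L2" "P (cat f L1 h k) (cat f L1 h (Suc k)) = -\<infinity>"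
    thus False using a
      by (cases "k < L1"; cases "k = L1") (auto simp: cat_def Suc_diff_le) }
qed

lemma MM_ge: "k \<in> {1..n} \<Longrightarrow> U i k + V k j \<le> mp_mult n U V i j"
  unfolding mp_mult_def by (rule SUP_upper2) auto

lemma MM_ex: "n \<ge> 1 \<Longrightarrow> \<exists>k\<in>{1..n}. mp_mult n U V i j = U i k + V k j"
  unfolding mp_mult_def by (rule SUP_fin_attain) auto

lemma ereal_add_ninf: "(x::ereal) \<noteq> \<infinity> \<Longrightarrow> y \<noteq> \<infinity> \<Longrightarrow> x + y \<noteq> \<infinity>"
  by (cases x; cases y) auto

lemma MM_ninf: "(\<And>k. k\<in>{1..n} \<Longrightarrow> U i k \<noteq> \<infinity> \<and> V k j \<noteq> \<infinity>) \<Longrightarrow> mp_mult n U V i j \<noteq> \<infinity>"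
  unfolding mp_mult_def by (rule SUP_fin_ninf) (auto intro: ereal_add_ninf)

definition chr :: "nat \<Rightarrow> mpmat \<Rightarrow> mpmat \<Rightarrow> nat \<Rightarrow> bool" where
  "chr n Q U L \<longleftrightarrow> (\<forall>a\<in>{1..n}. \<forall>b\<in>{1..n}. U a b \<noteq> \<infinity> \<and>
     (\<forall>f. vw n Q f L \<longrightarrow> f 0 = a \<longrightarrow> f L = b \<longrightarrow> ereal (ws Q f L) \<le> U a b) \<and>
     (\<forall>c. ereal c \<le> U a b \<longrightarrow> (\<exists>f. vw n Q f L \<and> f 0 = a \<and> f L = b \<and> c \<le> ws Q f L)))"

lemma chrD1: "chr n Q U L \<Longrightarrow> a \<in> {1..n} \<Longrightarrow> b \<in> {1..n} \<Longrightarrow> U a b \<noteq> \<infinity>"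
  unfolding chr_def by blast
lemma chrD2: "chr n Q U L \<Longrightarrow> vw n Q f L \<Longrightarrow> ereal (ws Q f L) \<le> U (f 0) (f L)"
  unfolding chr_def vw_def by blast
lemma chrD3: "chr n Q U L \<Longrightarrow> a \<in> {1..n} \<Longrightarrow> b \<in> {1..n} \<Longrightarrow> ereal c \<le> U a b \<Longrightarrow>
   \<exists>f. vw n Q f L \<and> f 0 = a \<and> f L = b \<and> c \<le> ws Q f L"
  unfolding chr_def by blast

lemma chr_one: "chr n Q mp_one 0"
  unfolding chr_def
proof (intro ballI conjI allI impI)
  fix a b assume ab: "a \<in> {1..n}" "b \<in> {1..n}"
  show "mp_one a b \<noteq> \<infinity>" by (simp add: mp_one_def)
  { fix f assume "vw n Q f 0" "f 0 = a" "f 0 = b"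
    thus "ereal (ws Q f 0) \<le> mp_one a b" by (simp add: mp_one_def) }
  { fix c assume "ereal c \<le> mp_one a b"
    hence "a = b" "c \<le> 0" by (auto simp: mp_one_def split: if_splits)
    thus "\<exists>f. vw n Q f 0 \<and> f 0 = a \<and> f 0 = b \<and> c \<le> ws Q f 0"
      using ab by (intro exI[of _ "\<lambda>_. a"]) (simp add: vw_0) }
qed

lemma chr_base:
  assumes "\<forall>a\<in>{1..n}. \<forall>b\<in>{1..n}. Q a b \<noteq> \<infinity>"
  shows "chr n Q Q 1"
  unfolding chr_def
proof (intro ballI conjI allI impI)
  fix a b assume ab: "a \<in> {1..n}" "b \<in> {1..n}"
  show "Q a b \<noteq> \<infinity>" using assms ab by blast
  { fix f assume f: "vw n Q f 1" "f 0 = a" "f 1 = b"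
    hence "Q a b \<noteq> -\<infinity>" unfolding vw_def by auto
    hence "ereal (real_of_ereal (Q a b)) = Q a b" using \<open>Q a b \<noteq> \<infinity>\<close> by (cases "Q a b") auto
    thus "ereal (ws Q f 1) \<le> Q a b" using f by (simp add: ws_def) }
  { fix c assume c: "ereal c \<le> Q a b"
    then obtain r where r: "Q a b = ereal r" "c \<le> r" using ereal_le_fin \<open>Q a b \<noteq> \<infinity>\<close> by blast
    let ?f = "\<lambda>k. if k = 0 then a else b"
    have "vw n Q ?f 1" using ab r unfolding vw_def by (auto simp: le_Suc_eq)
    moreover have "ws Q ?f 1 = r" using r by (simp add: ws_def)
    ultimately show "\<exists>f. vw n Q f 1 \<and> f 0 = a \<and> f 1 = b \<and> c \<le> ws Q f 1" using r by fastforce }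
qed

lemma chr_mult:
  assumes U: "chr n Q U L1" and V: "chr n Q V L2"
  shows "chr n Q (mp_mult n U V) (L1 + L2)"
  unfolding chr_def
proof (intro ballI conjI allI impI)
  fix a b assume ab: "a \<in> {1..n}" "b \<in> {1..n}"
  show "mp_mult n U V a b \<noteq> \<infinity>"
    by (rule MM_ninf) (use ab chrD1[OF U] chrD1[OF V] in blast)
  { fix f assume f: "vw n Q f (L1 + L2)" "f 0 = a" "f (L1 + L2) = b"
    have k: "f L1 \<in> {1..n}" using f unfolding vw_def by auto
    have f1: "vw n Q f L1" using f vw_le by auto
    have f2: "vw n Q (sh f L1) L2" using vw_sh[OF f(1), of L1] by simp
    have "ws Q f (L1 + L2) = ws Q f L1 + ws Q (sh f L1) L2" using ws_split[of L1 "L1+L2" Q f] by simp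
    hence "ereal (ws Q f (L1 + L2)) = ereal (ws Q f L1) + ereal (ws Q (sh f L1) L2)" by simp
    also have "\<dots> \<le> U a (f L1) + V (f L1) b"
      using chrD2[OF U f1] chrD2[OF V f2] f by (intro add_mono) (auto simp: add.commute)
    also have "\<dots> \<le> mp_mult n U V a b" by (rule MM_ge[OF k])
    finally show "ereal (ws Q f (L1 + L2)) \<le> mp_mult n U V a b" . }
  { fix c assume c: "ereal c \<le> mp_mult n U V a b"
    have n1: "n \<ge> 1" using ab by auto
    obtain k where k: "k \<in> {1..n}" "mp_mult n U V a b = U a k + V k b" using MM_ex[OF n1] by blast
    obtain u v where uv: "U a k = ereal u" "V k b = ereal v" "c \<le> u + v"
      using ereal_le_sum_fin[of "U a k" "V k b" c] c k chrD1[OF U] chrD1[OF V] ab by auto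
    obtain f1 where f1: "vw n Q f1 L1" "f1 0 = a" "f1 L1 = k" "u \<le> ws Q f1 L1"
      using chrD3[OF U ab(1) k(1), of u] uv by auto
    obtain f2 where f2: "vw n Q f2 L2" "f2 0 = k" "f2 L2 = b" "v \<le> ws Q f2 L2"
      using chrD3[OF V k(1) ab(2), of v] uv by auto
    have e: "f1 L1 = f2 0" using f1 f2 by simp
    show "\<exists>f. vw n Q f (L1 + L2) \<and> f 0 = a \<and> f (L1 + L2) = b \<and> c \<le> ws Q f (L1 + L2)"
      apply (rule exI[of _ "cat f1 L1 f2"])
      using vw_cat[OF f1(1) f2(1) e] ws_cat[of f1 L1 f2 Q L2, OF e] cat_end[of f1 L1 f2 L2, OF e] f1 f2 uv by auto }
qed

lemma chr_pow: "chr n Q N d \<Longrightarrow> chr n Q (mp_pow n N m) (m * d)"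
proof (induction m)
  case 0 thus ?case by (simp add: chr_one)
next
  case (Suc m)
  have "chr n Q (mp_mult n (mp_pow n N m) N) (m * d + d)" by (rule chr_mult[OF Suc.IH[OF Suc.prems] Suc.prems])
  thus ?case by (simp add: add.commute)
qed

lemma chr_pow1: "\<forall>a\<in>{1..n}. \<forall>b\<in>{1..n}. Q a b \<noteq> \<infinity> \<Longrightarrow> chr n Q (mp_pow n Q m) m"
  using chr_pow[OF chr_base, of n Q m] by simp

lemma pow1_eq: "a \<in> {1..n} \<Longrightarrow> \<forall>k\<in>{1..n}. Q k b \<noteq> \<infinity> \<Longrightarrow> mp_pow n Q 1 a b = Q a b"
proof -
  assume a: "a \<in> {1..n}" and nb: "\<forall>k\<in>{1..n}. Q k b \<noteq> \<infinity>"
  have "mp_pow n Q 1 a b = (SUP k\<in>{1..n}. mp_one a k + Q k b)" by (simp add: mp_mult_def)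
  also have "\<dots> = Q a b"
  proof (rule antisym)
    show "(SUP k\<in>{1..n}. mp_one a k + Q k b) \<le> Q a b"
      proof (rule SUP_least)
      fix k assume k: "k \<in> {1..n}"
      show "mp_one a k + Q k b \<le> Q a b"
      proof (cases "a = k")
        case False
        hence "mp_one a k = -\<infinity>" by (simp add: mp_one_def)
        moreover have "Q k b \<noteq> \<infinity>" using nb k by blast
        ultimately show ?thesis by (cases "Q k b") simp_all
      qed (simp add: mp_one_def)
    qed
    show "Q a b \<le> (SUP k\<in>{1..n}. mp_one a k + Q k b)"
      by (rule SUP_upper2[OF a]) (simp add: mp_one_def)
  qed
  finally show ?thesis .
qed

definition fin :: "nat \<Rightarrow> mpmat \<Rightarrow> bool" where
  "fin n P \<longleftrightarrow> (\<forall>a\<in>{1..n}. \<forall>b\<in>{1..n}. P a b \<noteq> \<infinity>)"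

lemma fin_D: "fin n P \<Longrightarrow> a \<in> {1..n} \<Longrightarrow> b \<in> {1..n} \<Longrightarrow> P a b \<noteq> \<infinity>"
  unfolding fin_def by blast

lemma real_ereal_fin: "(x::ereal) \<noteq> \<infinity> \<Longrightarrow> x \<noteq> -\<infinity> \<Longrightarrow> ereal (real_of_ereal x) = x"
  by (cases x) auto

lemma arc_eq: "fin n P \<Longrightarrow> vw n P f L \<Longrightarrow> k < L \<Longrightarrow> P (f k) (f (Suc k)) = ereal (real_of_ereal (P (f k) (f (Suc k))))"
  unfolding vw_def fin_def by (metis Suc_leI less_imp_le_nat real_ereal_fin)

lemma wsum_eq: "fin n P \<Longrightarrow> vw n P f L \<Longrightarrow> (\<Sum>l<L. P (f l) (f (Suc l))) = ereal (ws P f L)"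
proof -
  assume a: "fin n P" "vw n P f L"
  have "(\<Sum>l<L. P (f l) (f (Suc l))) = (\<Sum>l<L. ereal (real_of_ereal (P (f l) (f (Suc l)))))"
    by (rule sum.cong) (use arc_eq[OF a] in auto)
  also have "\<dots> = ereal (ws P f L)" by (simp add: ws_def)
  finally show ?thesis .
qed

lemma walk_list: "is_walk n P c \<Longrightarrow> vw n P (\<lambda>k. c ! k) (wlen c) \<and> wlen c \<ge> 1"
  unfolding is_walk_def vw_def wlen_def
  by (auto simp: subset_iff)

lemma list_walk:
  assumes "vw n P f L" "L \<ge> 1"
  shows "is_walk n P (map f [0..<Suc L])" "wlen (map f [0..<Suc L]) = L"
    "\<And>k. k \<le> L \<Longrightarrow> map f [0..<Suc L] ! k = f k"
proof -
  show "wlen (map f [0..<Suc L]) = L" by (simp add: wlen_def)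
  show "\<And>k. k \<le> L \<Longrightarrow> map f [0..<Suc L] ! k = f k" by (simp add: nth_map_upt less_Suc_eq_le del: upt_Suc)
  show "is_walk n P (map f [0..<Suc L])"
    using assms unfolding is_walk_def vw_def
    by (auto simp: nth_map_upt less_Suc_eq_le simp del: upt_Suc)
qed

lemma wweight_list: "fin n P \<Longrightarrow> is_walk n P c \<Longrightarrow> wweight P c = ereal (ws P (\<lambda>k. c ! k) (wlen c))"
  unfolding wweight_def using wsum_eq walk_list by blast

lemma cmean_list: "fin n P \<Longrightarrow> is_walk n P c \<Longrightarrow>
   cmean P c = ereal (ws P (\<lambda>k. c ! k) (wlen c) / real (wlen c))"
  unfolding cmean_def using wweight_list[of n P c] walk_list[of n P c] by auto

lemma wweight_map: "fin n P \<Longrightarrow> vw n P f L \<Longrightarrow> L \<ge> 1 \<Longrightarrow> wweight P (map f [0..<Suc L]) = ereal (ws P f L)"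
proof -
  assume a: "fin n P" "vw n P f L" "L \<ge> 1"
  have "wweight P (map f [0..<Suc L]) = ereal (ws P (\<lambda>k. map f [0..<Suc L] ! k) L)"
    using wweight_list[OF a(1) list_walk(1)[OF a(2,3)]] list_walk(2)[OF a(2,3)] by simp
  also have "ws P (\<lambda>k. map f [0..<Suc L] ! k) L = ws P f L"
    by (rule ws_cong) (use list_walk(3)[OF a(2,3)] in auto)
  finally show ?thesis .
qed

lemma cmean_map: "fin n P \<Longrightarrow> vw n P f L \<Longrightarrow> L \<ge> 1 \<Longrightarrow> cmean P (map f [0..<Suc L]) = ereal (ws P f L / L)"
  unfolding cmean_def using wweight_map[of n P f L] list_walk(2)[of n P f L] by auto

lemma ereal_minus_MInf: "(x::ereal) - ereal r = -\<infinity> \<longleftrightarrow> x = -\<infinity>" by (cases x) auto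
lemma ereal_minus_PInf: "(x::ereal) - ereal r = \<infinity> \<longleftrightarrow> x = \<infinity>" by (cases x) auto

lemma vw_lam: "mcm n P = ereal lam \<Longrightarrow> vw n (A_lam n P) f L = vw n P f L"
  unfolding vw_def A_lam_def by (auto simp: ereal_minus_MInf)

lemma fin_lam: "mcm n P = ereal lam \<Longrightarrow> fin n P \<Longrightarrow> fin n (A_lam n P)"
  unfolding fin_def A_lam_def by (auto simp: ereal_minus_PInf)

lemma ws_lam:
  assumes "mcm n P = ereal lam" "fin n P" "vw n P f L"
  shows "ws (A_lam n P) f L = ws P f L - lam * L"
proof -
  have "ws (A_lam n P) f L = (\<Sum>k<L. real_of_ereal (P (f k) (f (Suc k))) - lam)"
    unfolding ws_def
  proof (rule sum.cong)
    fix k assume "k \<in> {..<L}"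
    hence "P (f k) (f (Suc k)) = ereal (real_of_ereal (P (f k) (f (Suc k))))" using arc_eq[OF assms(2,3)] by auto
    thus "real_of_ereal (A_lam n P (f k) (f (Suc k))) = real_of_ereal (P (f k) (f (Suc k))) - lam"
      unfolding A_lam_def assms(1) by (cases "P (f k) (f (Suc k))") auto
  qed simp
  also have "\<dots> = ws P f L - lam * L" by (simp add: ws_def sum_subtractf)
  finally show ?thesis .
qed

lemma M_chr:
  assumes "mcm n P = ereal lam" "fin n P"
  shows "chr n (A_lam n P) (mp_pow n (mp_pow n (A_lam n P) (cyclicity_crit n P)) m) (m * cyclicity_crit n P)"
  by (rule chr_pow[OF chr_pow1]) (use fin_lam[OF assms] in \<open>simp add: fin_def\<close>)

lemma M_ninf:
  assumes "mcm n P = ereal lam" "fin n P" "a \<in> {1..n}" "b \<in> {1..n}"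
  shows "M_mat n P a b \<noteq> \<infinity>"
  unfolding M_mat_def by (rule SUP_fin_ninf) (use chrD1[OF M_chr[OF assms(1,2)]] assms in auto)

lemma M_ge:
  assumes "mcm n P = ereal lam" "fin n P" "m < n" "vw n P f (m * cyclicity_crit n P)"
  shows "ereal (ws P f (m * cyclicity_crit n P) - lam * (m * cyclicity_crit n P)) \<le>
     M_mat n P (f 0) (f (m * cyclicity_crit n P))"
proof -
  have "ereal (ws (A_lam n P) f (m * cyclicity_crit n P)) \<le>
     mp_pow n (mp_pow n (A_lam n P) (cyclicity_crit n P)) m (f 0) (f (m * cyclicity_crit n P))"
    by (rule chrD2[OF M_chr[OF assms(1,2)]]) (use assms(4) vw_lam[OF assms(1)] in simp)
  also have "\<dots> \<le> M_mat n P (f 0) (f (m * cyclicity_crit n P))"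
    unfolding M_mat_def by (rule SUP_upper) (use assms in auto)
  finally show ?thesis using ws_lam[OF assms(1,2,4)] by simp
qed

lemma M_wit:
  assumes "mcm n P = ereal lam" "fin n P" "a \<in> {1..n}" "b \<in> {1..n}" "ereal c \<le> M_mat n P a b"
  shows "\<exists>m<n. \<exists>f. vw n P f (m * cyclicity_crit n P) \<and> f 0 = a \<and> f (m * cyclicity_crit n P) = b \<and>
     c \<le> ws P f (m * cyclicity_crit n P) - lam * (m * cyclicity_crit n P)"
proof -
  have "n \<ge> 1" using assms by auto
  hence ne: "{..<n} \<noteq> {}" by (metis lessThan_empty_iff not_one_le_zero)
  obtain m where m: "m < n" "M_mat n P a b = mp_pow n (mp_pow n (A_lam n P) (cyclicity_crit n P)) m a b"
    unfolding M_mat_def using SUP_fin_attain[of "{..<n}" "\<lambda>m. mp_pow n (mp_pow n (A_lam n P) (cyclicity_crit n P)) m a b", OF _ ne] by auto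
  then obtain f where f: "vw n (A_lam n P) f (m * cyclicity_crit n P)" "f 0 = a" "f (m * cyclicity_crit n P) = b"
     "c \<le> ws (A_lam n P) f (m * cyclicity_crit n P)"
    using chrD3[OF M_chr[OF assms(1,2)] assms(3,4), of c] assms(5) by auto
  have "vw n P f (m * cyclicity_crit n P)" using f(1) vw_lam[OF assms(1)] by simp
  thus ?thesis using m f ws_lam[OF assms(1,2)] by auto
qed

definition subm :: "mpmat \<Rightarrow> mpmat \<Rightarrow> bool" where
  "subm Q P \<longleftrightarrow> (\<forall>a b. Q a b \<noteq> -\<infinity> \<longrightarrow> Q a b = P a b)"

lemma subm_vw: "subm Q P \<Longrightarrow> vw n Q f L \<Longrightarrow> vw n P f L"
  unfolding subm_def vw_def by metis

lemma subm_ws: "subm Q P \<Longrightarrow> vw n Q f L \<Longrightarrow> ws Q f L = ws P f L"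
  unfolding subm_def vw_def ws_def by (intro sum.cong) auto

lemma subm_trans: "subm Q P \<Longrightarrow> subm P R \<Longrightarrow> subm Q R"
  unfolding subm_def by metis

lemma subm_fin: "subm Q P \<Longrightarrow> fin n P \<Longrightarrow> fin n Q"
  unfolding subm_def fin_def by (metis MInfty_neq_PInfty(1))

lemma sum_shift1:
  fixes H :: "nat \<Rightarrow> real"
  assumes "m > 0"
  shows "(\<Sum>k<m. H (Suc k mod m)) = (\<Sum>k<m. H k)"
proof -
  obtain m' where m: "m = Suc m'" using assms by (cases m) auto
  have "(\<Sum>k<Suc m'. H (Suc k mod Suc m')) = (\<Sum>k<m'. H (Suc k mod Suc m')) + H (Suc m' mod Suc m')"
    by simp
  also have "(\<Sum>k<m'. H (Suc k mod Suc m')) = (\<Sum>k<m'. H (Suc k))"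
    by (rule sum.cong) auto
  also have "\<dots> = (\<Sum>k<Suc m'. H k) - H 0" using sum.lessThan_Suc_shift[of H m'] by linarith
  finally show ?thesis using m by simp
qed

lemma sum_shift:
  fixes F :: "nat \<Rightarrow> real"
  assumes "m > 0"
  shows "(\<Sum>k<m. F ((s + k) mod m)) = (\<Sum>k<m. F k)"
proof (induction s)
  case 0 thus ?case by (intro sum.cong) auto
next
  case (Suc s)
  have "(\<Sum>k<m. F ((Suc s + k) mod m)) = (\<Sum>k<m. (\<lambda>i. F ((s + i) mod m)) (Suc k mod m))"
    by (intro sum.cong) (auto simp: mod_add_right_eq)
  also have "\<dots> = (\<Sum>k<m. F ((s + k) mod m))" by (rule sum_shift1[OF assms])
  finally show ?case using Suc by simp
qed

locale ctx =
  fixes n :: nat and A :: mpmat and g :: nat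
  assumes entries: "\<forall>i\<in>{1..n}. \<forall>j\<in>{1..n}. A i j \<noteq> \<infinity>"
    and lam: "mcm n A \<noteq> -\<infinity>"
    and g_def: "g = g_crit n A"
    and A2_less: "mp_sless n (A2_mat n g A) (CSR n (A1_mat n g A) 1)"
    and sc: "crit_strongly_connected n A"
    and cyc: "(\<forall>k. 1 \<le> k \<and> k < g \<longrightarrow> crit_arc n A k (k + 1)) \<and> crit_arc n A g 1"
    and cop: "coprime g n"
    and ineq: "\<forall>i\<in>{1..n}. \<forall>j\<in>{1..n}. i > g \<and> j > i + 1 \<and> j mod g = (i + 1) mod g \<longrightarrow>
                 sless (ereal (real (j - i - 1)) * mcm n A + B1_mat g A i j)
                       (mp_pow n (A1_mat n g A) (j - i) i j)"
begin

abbreviation "X \<equiv> A1_mat n g A"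
abbreviation "B \<equiv> B1_mat g A"
abbreviation "Y \<equiv> mp_add X B"

lemma finA: "fin n A" using entries unfolding fin_def by blast

lemma subX: "subm X A" unfolding subm_def A1_mat_def by auto
lemma subB: "subm B A" unfolding subm_def B1_mat_def by auto
lemma XA: "X a b = A a b \<or> X a b = -\<infinity>" unfolding A1_mat_def by auto
lemma BA: "B a b = A a b \<or> B a b = -\<infinity>" unfolding B1_mat_def by auto
lemma YA: "Y a b = A a b \<or> Y a b = -\<infinity>"
  unfolding mp_add_def using XA[of a b] BA[of a b] by (auto simp: max_def)
lemma subY: "subm Y A" unfolding subm_def using YA by blast
lemma subXY: "subm X Y"
  unfolding subm_def mp_add_def
proof (intro allI impI)
  fix a b assume "X a b \<noteq> -\<infinity>"
  hence "X a b = A a b" using XA by blast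
  thus "X a b = max (X a b) (B a b)" using BA[of a b] by (auto simp: max_def)
qed

lemma finX: "fin n X" using subm_fin[OF subX finA] .
lemma finY: "fin n Y" using subm_fin[OF subY finA] .

lemma crit_cycle_mem: "is_crit_cycle n P c \<Longrightarrow> set c \<subseteq> {1..n}"
  unfolding is_crit_cycle_def is_cycle_def is_walk_def by auto

lemma crit_arc_props:
  assumes "crit_arc n P x y"
  shows "x \<in> {1..n}" "y \<in> {1..n}" "P x y \<noteq> -\<infinity>"
proof -
  obtain c l where c: "is_crit_cycle n P c" "l < wlen c" "c ! l = x" "c ! Suc l = y"
    using assms unfolding crit_arc_def by blast
  have w: "is_walk n P c" using c(1) unfolding is_crit_cycle_def is_cycle_def by auto
  have "Suc l < length c" using c(2) unfolding wlen_def by auto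
  thus "x \<in> {1..n}" "y \<in> {1..n}" using w c unfolding is_walk_def by (auto simp: subset_iff)
  show "P x y \<noteq> -\<infinity>" using w c unfolding is_walk_def wlen_def by auto
qed

lemma g_pos: "1 \<le> g" and g_le: "g \<le> n"
  using crit_arc_props(1)[of A g 1] cyc by auto

lemma n_pos: "1 \<le> n" using g_pos g_le by simp

definition lamr :: real where "lamr = real_of_ereal (mcm n A)"

lemma ws_bound:
  assumes "fin n P" "vw n P f L"
  shows "ws P f L \<le> L * Max {real_of_ereal (P a b) | a b. a \<in> {1..n} \<and> b \<in> {1..n}}"
proof -
  let ?S = "{real_of_ereal (P a b) | a b. a \<in> {1..n} \<and> b \<in> {1..n}}"
  have fS: "finite ?S"
    by (rule finite_image_set2) auto
  have "ws P f L \<le> (\<Sum>k<L. Max ?S)" unfolding ws_def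
  proof (rule sum_mono)
    fix k assume "k \<in> {..<L}"
    hence "f k \<in> {1..n}" "f (Suc k) \<in> {1..n}" using assms(2) unfolding vw_def by auto
    thus "real_of_ereal (P (f k) (f (Suc k))) \<le> Max ?S" using fS by (intro Max_ge) auto
  qed
  thus ?thesis by simp
qed

lemma mcm_fin: "mcm n A \<noteq> \<infinity>"
proof -
  let ?M = "Max {real_of_ereal (A a b) | a b. a \<in> {1..n} \<and> b \<in> {1..n}}"
  have "mcm n A \<le> ereal ?M" unfolding mcm_def
  proof (rule Sup_least)
    fix x assume "x \<in> {cmean A c |c. is_cycle n A c}"
    then obtain c where c: "x = cmean A c" "is_cycle n A c" by auto
    have w: "is_walk n A c" using c unfolding is_cycle_def by auto
    have l: "wlen c \<ge> 1" "vw n A (\<lambda>k. c ! k) (wlen c)" using walk_list[OF w] by auto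
    have "ws A (\<lambda>k. c ! k) (wlen c) \<le> wlen c * ?M" by (rule ws_bound[OF finA l(2)])
    hence "ws A (\<lambda>k. c ! k) (wlen c) / wlen c \<le> ?M" using l(1)
      by (simp add: divide_le_eq mult.commute)
    thus "x \<le> ereal ?M" using c cmean_list[OF finA w] by simp
  qed
  thus ?thesis by auto
qed

lemma mcm_eq: "mcm n A = ereal lamr"
  unfolding lamr_def using mcm_fin lam by (cases "mcm n A") auto

lemma cycle_le:
  assumes "is_cycle n A c"
  shows "ws A (\<lambda>k. c ! k) (wlen c) \<le> lamr * wlen c"
proof -
  have w: "is_walk n A c" using assms unfolding is_cycle_def by auto
  have l: "wlen c \<ge> 1" using walk_list[OF w] by auto
  have "cmean A c \<le> mcm n A" unfolding mcm_def by (rule Sup_upper) (use assms in auto)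
  hence "ws A (\<lambda>k. c ! k) (wlen c) / wlen c \<le> lamr" using cmean_list[OF finA w] mcm_eq by simp
  thus ?thesis using l by (simp add: divide_le_eq mult.commute)
qed

lemma CW:
  "vw n A f L \<Longrightarrow> f 0 = f L \<Longrightarrow> ws A f L \<le> lamr * L"
proof (induction L arbitrary: f rule: less_induct)
  case (less L)
  show ?case
  proof (cases "L = 0")
    case True thus ?thesis by simp
  next
    case False
    hence L1: "L \<ge> 1" by simp
    show ?thesis
    proof (cases "inj_on f {0..<L}")
      case True
      let ?c = "map f [0..<Suc L]"
      have w: "is_walk n A ?c" and wl: "wlen ?c = L" using list_walk[OF less.prems(1) L1] by auto
      have "butlast ?c = map f [0..<L]" by simp
      hence d: "distinct (butlast ?c)" using True by (simp add: distinct_map)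
      have "hd ?c = f 0" by (simp add: hd_map del: upt_Suc)
      moreover have "last ?c = f L" by simp
      ultimately have cy: "is_cycle n A ?c" using w d less.prems(2) unfolding is_cycle_def by simp
      have "ws A (\<lambda>k. ?c ! k) (wlen ?c) = ws A f L"
        unfolding wl by (rule ws_cong) (use list_walk(3)[OF less.prems(1) L1] in auto)
      thus ?thesis using cycle_le[OF cy] wl by simp
    next
      case False
      then obtain p q where pq: "p < q" "q < L" "f p = f q"
        unfolding inj_on_def by (metis atLeastLessThan_iff linorder_neqE_nat)
      have s1: "ws A f L = ws A f p + ws A (sh f p) (L - p)" using ws_split[of p L A f] pq by simp
      have s2: "ws A (sh f p) (L - p) = ws A (sh f p) (q - p) + ws A (sh (sh f p) (q - p)) (L - p - (q - p))"
        using ws_split[of "q - p" "L - p" A "sh f p"] pq by simp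
      have e: "sh (sh f p) (q - p) = sh f q" using pq by (auto simp: sh_def)
      have Lq: "L - p - (q - p) = L - q" using pq by simp
      have v1: "vw n A (sh f p) (q - p)"
        using vw_sh[OF vw_le[OF less.prems(1), of q] , of p] pq by simp
      have i1: "ws A (sh f p) (q - p) \<le> lamr * (q - p)"
        using less.IH[of "q - p" "sh f p"] v1 pq by (simp add: sh_def)
      have v2: "vw n A (cat f p (sh f q)) (p + (L - q))"
        by (rule vw_cat) (use vw_le[OF less.prems(1), of p] vw_sh[OF less.prems(1), of q] pq in auto)
      have w2: "ws A (cat f p (sh f q)) (p + (L - q)) = ws A f p + ws A (sh f q) (L - q)"
        by (rule ws_cat) (use pq in simp)
      have e2: "cat f p (sh f q) (p + (L - q)) = f L" using cat_end[of f p "sh f q" "L - q"] pq by simp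
      have i2: "ws A (cat f p (sh f q)) (p + (L - q)) \<le> lamr * (p + (L - q))"
        using less.IH[of "p + (L - q)" "cat f p (sh f q)"] v2 e2 pq less.prems(2) by simp
      have "ws A f L = ws A (sh f p) (q - p) + ws A (cat f p (sh f q)) (p + (L - q))"
        using s1 s2 e Lq w2 by simp
      also have "\<dots> \<le> lamr * (q - p) + lamr * (p + (L - q))" using i1 i2 by simp
      also have "\<dots> = lamr * L" using pq by (simp add: algebra_simps of_nat_diff)
      finally show ?thesis .
    qed
  qed
qed

lemma closed2:
  assumes "vw n A f L1" "vw n A h L2" "f L1 = h 0" "h L2 = f 0"
  shows "ws A f L1 + ws A h L2 \<le> lamr * (L1 + L2)"
proof -
  have "ws A (cat f L1 h) (L1 + L2) \<le> lamr * (L1 + L2)"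
    using CW[OF vw_cat[OF assms(1-3)]] cat_end[of f L1 h L2] assms(3,4) by simp
  thus ?thesis using ws_cat[of f L1 h A L2] assms(3) by simp
qed

end

lemma mod_inj_lt:
  fixes m a k k' :: nat
  assumes "k < m" "k' < m" "(a + k) mod m = (a + k') mod m"
  shows "k = k'"
proof -
  { fix u v :: nat assume uv: "u < m" "v < m" "u \<le> v" "(a + u) mod m = (a + v) mod m"
    hence "m dvd (a + v) - (a + u)" using mod_eq_dvd_iff_nat[of "a + u" "a + v" m] by simp
    hence "m dvd v - u" by simp
    moreover have "v - u < m" using uv by simp
    ultimately have "v - u = 0" using dvd_imp_le by (metis neq0_conv not_less)
    hence "u = v" using uv by simp }
  thus ?thesis using assms by (metis linorder_le_cases)
qed

context ctx begin

lemma crit_cycle_basic: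
  assumes "is_crit_cycle n A c"
  shows "is_walk n A c" "wlen c \<ge> 1" "length c = Suc (wlen c)" "c ! wlen c = c ! 0"
    "distinct (butlast c)" "ws A (\<lambda>k. c ! k) (wlen c) = lamr * wlen c"
proof -
  have cy: "is_cycle n A c" using assms unfolding is_crit_cycle_def by auto
  thus w: "is_walk n A c" unfolding is_cycle_def by auto
  show l1: "wlen c \<ge> 1" using walk_list[OF w] by auto
  show ll: "length c = Suc (wlen c)" using w unfolding is_walk_def wlen_def by auto
  have "hd c = last c" using cy unfolding is_cycle_def by auto
  moreover have "c \<noteq> []" using ll by auto
  ultimately show "c ! wlen c = c ! 0" using ll by (simp add: hd_conv_nth last_conv_nth)
  show "distinct (butlast c)" using cy unfolding is_cycle_def by auto
  have "cmean A c = mcm n A" using assms unfolding is_crit_cycle_def by auto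
  hence "ws A (\<lambda>k. c ! k) (wlen c) / wlen c = lamr" using cmean_list[OF finA w] mcm_eq by simp
  thus "ws A (\<lambda>k. c ! k) (wlen c) = lamr * wlen c" using l1 by (simp add: divide_eq_eq)
qed

lemma ROT:
  assumes "crit_arc n A x y"
  shows "\<exists>m p. m \<ge> 1 \<and> vw n A p m \<and> p 0 = y \<and> p (m - 1) = x \<and> p m = y \<and> inj_on p {0..<m} \<and>
     (\<forall>k<m. crit_arc n A (p k) (p (Suc k))) \<and> ws A p m = lamr * m"
proof -
  obtain c l where c: "is_crit_cycle n A c" "l < wlen c" "c ! l = x" "c ! Suc l = y"
    using assms unfolding crit_arc_def by blast
  define m where "m = wlen c"
  note cb = crit_cycle_basic[OF c(1), folded m_def]
  have m1: "m \<ge> 1" using cb by simp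
  define cc where "cc j = c ! (j mod m)" for j
  have ccS: "cc (Suc j) = c ! Suc (j mod m)" for j
    unfolding cc_def using cb(4) by (auto simp: mod_Suc)
  define p where "p k = cc (Suc l + k)" for k
  have lm: "l < m" using c(2) m_def by simp
  have p0: "p 0 = y" unfolding p_def using ccS[of l] lm c(4) by simp
  have pm1: "p (m - 1) = x" unfolding p_def cc_def using lm m1 c(3) by simp
  have "Suc (l + m) mod m = Suc l mod m" by (metis add_Suc mod_add_self2)
  hence pm: "p m = y" unfolding p_def using p0[unfolded p_def] cc_def by simp
  have pS: "p (Suc k) = c ! Suc ((Suc l + k) mod m)" for k unfolding p_def using ccS[of "Suc l + k"] by simp
  have pk: "p k = c ! ((Suc l + k) mod m)" for k unfolding p_def cc_def by simp
  have lt: "(Suc l + k) mod m < m" for k using m1 by simp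
  have arcs: "crit_arc n A (p k) (p (Suc k))" for k
    unfolding crit_arc_def
    by (rule exI[of _ c], rule conjI[OF c(1)], rule exI[of _ "(Suc l + k) mod m"]) (use pk pS lt m_def in auto)
  have mem: "c ! i \<in> {1..n}" if "i \<le> m" for i
    using cb(1) cb(3) that unfolding is_walk_def by (auto simp: subset_iff)
  have vw: "vw n A p m" unfolding vw_def
  proof (intro conjI allI impI)
    fix k show "p k \<in> {1..n}" using pk mem lt by (simp add: less_imp_le)
  next
    fix k show "A (p k) (p (Suc k)) \<noteq> -\<infinity>" using crit_arc_props(3)[OF arcs] .
  qed
  have inj: "inj_on p {0..<m}"
  proof (rule inj_onI)
    fix k k' assume kk: "k \<in> {0..<m}" "k' \<in> {0..<m}" "p k = p k'"
    have "butlast c ! ((Suc l + k) mod m) = butlast c ! ((Suc l + k') mod m)"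
      using kk(3) pk lt cb(3) by (simp add: nth_butlast)
    moreover have "length (butlast c) = m" using cb(3) by simp
    ultimately have "(Suc l + k) mod m = (Suc l + k') mod m"
      using cb(5) lt nth_eq_iff_index_eq by metis
    thus "k = k'" by (rule mod_inj_lt[of k m k' "Suc l", rotated 2]) (use kk in auto)
  qed
  have "ws A p m = (\<Sum>k<m. (\<lambda>i. real_of_ereal (A (c ! i) (c ! Suc i))) ((Suc l + k) mod m))"
    unfolding ws_def using pk pS by simp
  also have "\<dots> = (\<Sum>i<m. real_of_ereal (A (c ! i) (c ! Suc i)))" by (rule sum_shift) (use m1 in simp)
  also have "\<dots> = lamr * m" using cb(6) unfolding ws_def m_def by simp
  finally show ?thesis using m1 vw p0 pm1 pm inj arcs by blast
qed

lemma RP: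
  assumes "crit_arc n A x y"
  shows "\<exists>L h. vw n A h L \<and> h 0 = y \<and> h L = x \<and> ws A h L + real_of_ereal (A x y) = lamr * (L + 1)"
proof -
  obtain m p where p: "m \<ge> 1" "vw n A p m" "p 0 = y" "p (m - 1) = x" "p m = y" "ws A p m = lamr * m"
    using ROT[OF assms] by blast
  have "ws A p m = ws A p (m - 1) + real_of_ereal (A x y)"
    using ws_Suc[of A p "m - 1"] p by simp
  moreover have "vw n A p (m - 1)" using vw_le[OF p(2)] by simp
  ultimately show ?thesis using p by (intro exI[of _ "m - 1"] exI[of _ p]) simp
qed

lemma crit_fin: "crit_arc n A x y \<Longrightarrow> A x y = ereal (real_of_ereal (A x y))"
  using crit_arc_props[of A x y] entries real_ereal_fin by metis

definition zg :: "nat \<Rightarrow> nat" where "zg k = k mod g + 1"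

lemma zg_lt: "k < g \<Longrightarrow> zg k = k + 1" unfolding zg_def by simp
lemma zg_g: "zg g = 1" unfolding zg_def by simp
lemma zg_mod: "k mod g < g" using g_pos by simp
lemma zg_range: "zg k \<in> {1..g}" unfolding zg_def using zg_mod[of k] by simp
lemma zg_Suc: "zg (Suc k) = (if zg k < g then zg k + 1 else 1)"
  unfolding zg_def using zg_mod[of k] by (auto simp: mod_Suc)

definition zgarc :: "nat \<Rightarrow> nat \<Rightarrow> bool" where
  "zgarc x y \<longleftrightarrow> 1 \<le> x \<and> x \<le> g \<and> y = (if x < g then x + 1 else 1)"

lemma zg_arc: "zgarc (zg k) (zg (Suc k))"
  unfolding zgarc_def using zg_range[of k] zg_Suc[of k] by auto

lemma zgarc_crit: "zgarc x y \<Longrightarrow> crit_arc n A x y"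
  unfolding zgarc_def using cyc by (auto split: if_splits)

lemma zgarc_X: "zgarc x y \<Longrightarrow> X x y = A x y"
  unfolding zgarc_def A1_mat_def using g_le by (auto split: if_splits)

lemma zgarc_Y: "zgarc x y \<Longrightarrow> Y x y = A x y"
proof -
  assume z: "zgarc x y"
  have "B x y = -\<infinity>" using z unfolding zgarc_def B1_mat_def by auto
  thus ?thesis using zgarc_X[OF z] by (simp add: mp_add_def)
qed

lemma vw_zg: "vw n A zg L"
  unfolding vw_def using zg_range g_le crit_arc_props(3)[OF zgarc_crit[OF zg_arc]] by fastforce

lemma RC:
  assumes "1 \<le> k" "k \<le> g"
  shows "\<exists>L h. vw n A h L \<and> h 0 = k \<and> h L = 1 \<and>
     ws A h L - lamr * L = - (ws A zg (k - 1) - lamr * (k - 1))"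
  using assms
proof (induction k rule: nat_induct_at_least)
  case base
  show ?case by (rule exI[of _ 0], rule exI[of _ "\<lambda>_. 1"]) (use n_pos in \<open>simp add: vw_0\<close>)
next
  case (Suc k)
  then obtain L h where h: "vw n A h L" "h 0 = k" "h L = 1"
     "ws A h L - lamr * L = - (ws A zg (k - 1) - lamr * (k - 1))" by auto
  have kg: "k < g" using Suc by simp
  have z1: "zg (k - 1) = k" "zg k = k + 1" using zg_lt kg Suc(1) by auto
  have ca: "crit_arc n A k (Suc k)" using zgarc_crit[of k "Suc k"] kg Suc(1) unfolding zgarc_def by simp
  obtain L' h' where h': "vw n A h' L'" "h' 0 = Suc k" "h' L' = k"
     "ws A h' L' + real_of_ereal (A k (Suc k)) = lamr * (L' + 1)" using RP[OF ca] by blast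
  have e: "h' L' = h 0" using h h' by simp
  have wz: "ws A zg k = ws A zg (k - 1) + real_of_ereal (A k (Suc k))"
    using ws_Suc[of A zg "k - 1"] z1 Suc(1) by simp
  show ?case
    apply (rule exI[of _ "L' + L"], rule exI[of _ "cat h' L' h"])
    using vw_cat[OF h'(1) h(1) e] cat_end[of h' L' h L, OF e] ws_cat[of h' L' h A L, OF e] h h' wz Suc(1)
    by (simp add: algebra_simps of_nat_diff)
qed

lemma ZG: "ws A zg g = lamr * g"
proof -
  obtain L h where h: "vw n A h L" "h 0 = g" "h L = 1"
     "ws A h L - lamr * L = - (ws A zg (g - 1) - lamr * (g - 1))" using RC[of g] g_pos by auto
  have ca: "crit_arc n A g 1" using cyc by simp
  obtain L' h' where h': "vw n A h' L'" "h' 0 = 1" "h' L' = g"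
     "ws A h' L' + real_of_ereal (A g 1) = lamr * (L' + 1)" using RP[OF ca] by blast
  have wz: "ws A zg g = ws A zg (g - 1) + real_of_ereal (A g 1)"
    using ws_Suc[of A zg "g - 1"] zg_lt[of "g - 1"] zg_g g_pos by simp
  have "ws A h' L' + ws A h L \<le> lamr * (L' + L)" using closed2[OF h'(1) h(1)] h h' by simp
  hence ge: "ws A zg g \<ge> lamr * g" using h(4) h'(4) wz g_pos by (simp add: algebra_simps of_nat_diff)
  have "ws A zg g \<le> lamr * g" using CW[OF vw_zg] zg_g by (simp add: zg_def)
  thus ?thesis using ge by simp
qed

definition zgl :: "nat list" where "zgl = map zg [0..<Suc g]"

lemma subm_cycle:
  assumes "subm P A" "is_cycle n P c"
  shows "is_cycle n A c" "cmean P c = cmean A c"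
proof -
  show "is_cycle n A c" using assms unfolding is_cycle_def is_walk_def subm_def by metis
  have "wweight P c = wweight A c" unfolding wweight_def
    by (rule sum.cong) (use assms in \<open>auto simp: is_cycle_def is_walk_def subm_def wlen_def\<close>)
  thus "cmean P c = cmean A c" unfolding cmean_def by simp
qed

lemma zgl_cycle:
  assumes "subm P A" "\<And>x y. zgarc x y \<Longrightarrow> P x y = A x y"
  shows "is_cycle n P zgl" "cmean P zgl = ereal lamr"
proof -
  have v: "vw n P zg g" using vw_zg assms(2)[OF zg_arc] unfolding vw_def by simp
  have w: "is_walk n P zgl" and wl: "wlen zgl = g" unfolding zgl_def using list_walk[OF v g_pos] by auto
  have "hd zgl = zg 0" unfolding zgl_def by (simp add: hd_map del: upt_Suc)
  moreover have "last zgl = zg g" unfolding zgl_def by simp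
  moreover have "butlast zgl = map zg [0..<g]" unfolding zgl_def by simp
  moreover have "inj_on zg {0..<g}" using zg_lt by (intro inj_onI) auto
  ultimately show "is_cycle n P zgl" using w zg_g unfolding is_cycle_def
    by (simp add: distinct_map zg_def)
  have "ws P zg g = ws A zg g" using v unfolding ws_def using assms(2)[OF zg_arc] by simp
  thus "cmean P zgl = ereal lamr" unfolding zgl_def using cmean_map[OF subm_fin[OF assms(1) finA] v g_pos] ZG g_pos
    by simp
qed

lemma mcm_sub:
  assumes "subm P A" "\<And>x y. zgarc x y \<Longrightarrow> P x y = A x y"
  shows "mcm n P = ereal lamr"
proof (rule antisym)
  show "mcm n P \<le> ereal lamr" unfolding mcm_def
  proof (rule Sup_least)
    fix x assume "x \<in> {cmean P c |c. is_cycle n P c}"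
    then obtain c where c: "x = cmean P c" "is_cycle n P c" by auto
    have "cmean A c \<le> mcm n A" unfolding mcm_def by (rule Sup_upper) (use subm_cycle[OF assms(1) c(2)] in auto)
    thus "x \<le> ereal lamr" using c subm_cycle[OF assms(1) c(2)] mcm_eq by simp
  qed
  show "ereal lamr \<le> mcm n P" unfolding mcm_def
    by (rule Sup_upper, rule CollectI, rule exI[of _ zgl]) (use zgl_cycle[OF assms] in auto)
qed

lemma crit_sub:
  assumes "subm P A" "mcm n P = ereal lamr" "is_crit_cycle n P c"
  shows "is_crit_cycle n A c"
  using assms subm_cycle[OF assms(1)] mcm_eq unfolding is_crit_cycle_def by auto

lemma critarc_sub: "subm P A \<Longrightarrow> mcm n P = ereal lamr \<Longrightarrow> crit_arc n P x y \<Longrightarrow> crit_arc n A x y"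
  unfolding crit_arc_def using crit_sub by blast

lemma critnode_sub: "subm P A \<Longrightarrow> mcm n P = ereal lamr \<Longrightarrow> crit_node n P x \<Longrightarrow> crit_node n A x"
  unfolding crit_node_def using crit_sub by blast

lemma zgl_crit:
  assumes "subm P A" "\<And>x y. zgarc x y \<Longrightarrow> P x y = A x y"
  shows "is_crit_cycle n P zgl"
  unfolding is_crit_cycle_def using zgl_cycle[OF assms] mcm_sub[OF assms] by simp

lemma zgl_nth: "k \<le> g \<Longrightarrow> zgl ! k = zg k"
  unfolding zgl_def by (simp add: nth_map_upt less_Suc_eq_le del: upt_Suc)

lemma zgl_wlen: "wlen zgl = g" unfolding zgl_def wlen_def by simp

lemma zgarc_P_crit:
  assumes "subm P A" "\<And>x y. zgarc x y \<Longrightarrow> P x y = A x y" "zgarc x y"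
  shows "crit_arc n P x y"
proof -
  have x: "1 \<le> x" "x \<le> g" "y = (if x < g then x + 1 else 1)" using assms(3) unfolding zgarc_def by auto
  have "zgl ! (x - 1) = x" using zgl_nth[of "x - 1"] zg_lt[of "x - 1"] x by simp
  moreover have "zgl ! Suc (x - 1) = y" using zgl_nth[of x] x zg_lt[of x] zg_g by (auto split: if_splits)
  moreover have "x - 1 < wlen zgl" using x zgl_wlen by simp
  ultimately show ?thesis unfolding crit_arc_def using zgl_crit[OF assms(1,2)] by blast
qed

end

context ctx begin

lemma mcmX: "mcm n X = ereal lamr" by (rule mcm_sub[OF subX zgarc_X])
lemma mcmY: "mcm n Y = ereal lamr" by (rule mcm_sub[OF subY zgarc_Y])

lemma subS: "subm (S_mat n P) P" unfolding subm_def S_mat_def by auto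

lemma CSR_parts:
  assumes "subm P A" "mcm n P = ereal lamr"
  shows "CSR n P t = mp_mult n (mp_mult n (C_mat n P) (mp_pow n (S_mat n P) t)) (R_mat n P)"
  unfolding CSR_def using assms(2) by simp

lemma C_ninf: "subm P A \<Longrightarrow> mcm n P = ereal lamr \<Longrightarrow> a \<in> {1..n} \<Longrightarrow> b \<in> {1..n} \<Longrightarrow> C_mat n P a b \<noteq> \<infinity>"
  unfolding C_mat_def using M_ninf[of n P lamr a b] subm_fin[OF _ finA] by auto
lemma R_ninf: "subm P A \<Longrightarrow> mcm n P = ereal lamr \<Longrightarrow> a \<in> {1..n} \<Longrightarrow> b \<in> {1..n} \<Longrightarrow> R_mat n P a b \<noteq> \<infinity>"
  unfolding R_mat_def using M_ninf[of n P lamr a b] subm_fin[OF _ finA] by auto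

lemma St_chr: "subm P A \<Longrightarrow> chr n (S_mat n P) (mp_pow n (S_mat n P) t) t"
  by (rule chr_pow1) (use subm_fin[OF subS subm_fin[OF _ finA]] in \<open>simp add: fin_def\<close>)

lemma CSR_ninf:
  assumes "subm P A" "mcm n P = ereal lamr" "a \<in> {1..n}" "b \<in> {1..n}"
  shows "CSR n P t a b \<noteq> \<infinity>"
  unfolding CSR_parts[OF assms(1,2)]
  by (rule MM_ninf, rule conjI, rule MM_ninf)
     (use assms C_ninf[OF assms(1,2)] R_ninf[OF assms(1,2)] chrD1[OF St_chr[OF assms(1)]] in auto)

lemma CSR_ub:
  assumes P: "subm P A" "mcm n P = ereal lamr" and ab: "a \<in> {1..n}" "b \<in> {1..n}"
    and c: "ereal c \<le> CSR n P t a b"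
  shows "\<exists>L f. vw n P f L \<and> f 0 = a \<and> f L = b \<and> c \<le> ws P f L - lamr * L + lamr * t"
proof -
  have fP: "fin n P" using subm_fin[OF P(1) finA] .
  let ?C = "C_mat n P" and ?S = "mp_pow n (S_mat n P) t" and ?R = "R_mat n P"
  let ?G = "cyclicity_crit n P"
  obtain l where l: "l \<in> {1..n}" "CSR n P t a b = mp_mult n ?C ?S a l + ?R l b"
    using MM_ex[OF n_pos] CSR_parts[OF P] by metis
  have n1: "mp_mult n ?C ?S a l \<noteq> \<infinity>"
    by (rule MM_ninf) (use C_ninf[OF P] chrD1[OF St_chr[OF P(1)]] ab l in auto)
  obtain u r where ur: "mp_mult n ?C ?S a l = ereal u" "?R l b = ereal r" "c \<le> u + r"
    using ereal_le_sum_fin[OF n1 R_ninf[OF P l(1) ab(2)]] c l by metis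
  obtain k where k: "k \<in> {1..n}" "mp_mult n ?C ?S a l = ?C a k + ?S k l"
    using MM_ex[OF n_pos] by metis
  obtain c1 s where cs: "?C a k = ereal c1" "?S k l = ereal s" "u \<le> c1 + s"
    using ereal_le_sum_fin[OF C_ninf[OF P ab(1) k(1)] chrD1[OF St_chr[OF P(1)] k(1) l(1)]] ur k by force
  have Mk: "M_mat n P a k = ereal c1" using cs(1) unfolding C_mat_def by (auto split: if_splits)
  obtain m1 f1 where f1: "m1 < n" "vw n P f1 (m1 * ?G)" "f1 0 = a" "f1 (m1 * ?G) = k"
      "c1 \<le> ws P f1 (m1 * ?G) - lamr * (m1 * ?G)"
    using M_wit[OF P(2) fP ab(1) k(1), of c1] Mk by auto
  obtain f2 where f2: "vw n (S_mat n P) f2 t" "f2 0 = k" "f2 t = l" "s \<le> ws (S_mat n P) f2 t"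
    using chrD3[OF St_chr[of P t, OF P(1)] k(1) l(1), of s] cs by auto
  have f2': "vw n P f2 t" "ws (S_mat n P) f2 t = ws P f2 t" using subm_vw[OF subS f2(1)] subm_ws[OF subS f2(1)] by auto
  have Ml: "M_mat n P l b = ereal r" using ur(2) unfolding R_mat_def by (auto split: if_splits)
  obtain m3 f3 where f3: "m3 < n" "vw n P f3 (m3 * ?G)" "f3 0 = l" "f3 (m3 * ?G) = b"
      "r \<le> ws P f3 (m3 * ?G) - lamr * (m3 * ?G)"
    using M_wit[OF P(2) fP l(1) ab(2), of r] Ml by auto
  define L1 where "L1 = m1 * ?G"
  define L3 where "L3 = m3 * ?G"
  define f12 where "f12 = cat f1 L1 f2"
  have e1: "f1 L1 = f2 0" using f1 f2 L1_def by simp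
  have v12: "vw n P f12 (L1 + t)" unfolding f12_def by (rule vw_cat) (use f1 f2' e1 L1_def in auto)
  have w12: "ws P f12 (L1 + t) = ws P f1 L1 + ws P f2 t" unfolding f12_def by (rule ws_cat[of f1 L1 f2 P t, OF e1])
  have end12: "f12 (L1 + t) = l" unfolding f12_def using cat_end[of f1 L1 f2 t, OF e1] f2 by simp
  have e2: "f12 (L1 + t) = f3 0" using end12 f3 by simp
  define f where "f = cat f12 (L1 + t) f3"
  have v: "vw n P f (L1 + t + L3)" unfolding f_def by (rule vw_cat) (use v12 f3 e2 L3_def in auto)
  have w: "ws P f (L1 + t + L3) = ws P f12 (L1 + t) + ws P f3 L3" unfolding f_def by (rule ws_cat[of f12 "L1 + t" f3 P L3, OF e2])
  have s0: "f 0 = a" unfolding f_def f12_def using f1 by simp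
  have s1: "f (L1 + t + L3) = b" unfolding f_def using cat_end[of f12 "L1 + t" f3 L3, OF e2] f3 L3_def by simp
  have ww: "ws P f (L1 + t + L3) = ws P f1 L1 + ws P f2 t + ws P f3 L3" using w w12 by simp
  have eq: "lamr * real (L1 + t + L3) = lamr * L1 + lamr * t + lamr * L3" by (simp add: distrib_left)
  have "c1 \<le> ws P f1 L1 - lamr * L1" "r \<le> ws P f3 L3 - lamr * L3" using f1(5) f3(5) L1_def L3_def by auto
  hence "c \<le> ws P f (L1 + t + L3) - lamr * (L1 + t + L3) + lamr * t"
    using ww eq cs(3) ur(3) f2(4) f2'(2) by linarith
  thus ?thesis using v s0 s1 by blast
qed

definition tame :: "nat \<Rightarrow> nat \<Rightarrow> bool" where
  "tame x y \<longleftrightarrow> (1 \<le> x \<and> x < n \<and> y = x + 1) \<or> (x = n \<and> y = 1) \<or> (x = g \<and> y = 1) \<or>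
     (g < y \<and> y \<le> x \<and> y mod g = (x + 1) mod g)"

lemma Xsupp: "X x y \<noteq> -\<infinity> \<Longrightarrow> (1 \<le> x \<and> x < n \<and> y = x + 1) \<or> (x = n \<and> y = 1) \<or> (x = g \<and> y = 1)"
  unfolding A1_mat_def by (auto split: if_splits)

lemma Xsupp_eq: "(1 \<le> x \<and> x < n \<and> y = x + 1) \<or> (x = n \<and> y = 1) \<or> (x = g \<and> y = 1) \<Longrightarrow> X x y = A x y"
  unfolding A1_mat_def by auto

lemma Bsupp: "B x y \<noteq> -\<infinity> \<Longrightarrow> g < x \<and> g < y \<and> y mod g = (x + 1) mod g \<and> B x y = A x y"
  unfolding B1_mat_def by (auto split: if_splits)

lemma Ysupp: "Y x y \<noteq> -\<infinity> \<Longrightarrow> X x y \<noteq> -\<infinity> \<or> B x y \<noteq> -\<infinity>"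
  unfolding mp_add_def by (auto simp: max_def split: if_splits)

lemma TAME:
  assumes ca: "crit_arc n A x y"
  shows "tame x y"
proof -
  have xy: "x \<in> {1..n}" "y \<in> {1..n}" using crit_arc_props[OF ca] by auto
  define axy where "axy = real_of_ereal (A x y)"
  have Axy: "A x y = ereal axy" using crit_fin[OF ca] axy_def by simp
  obtain Lh h where h: "vw n A h Lh" "h 0 = y" "h Lh = x" "ws A h Lh + axy = lamr * (Lh + 1)"
    using RP[OF ca] axy_def by blast
  show ?thesis
  proof (cases "mp_add X B x y > -\<infinity>")
    case False
    hence "A2_mat n g A x y = A x y" unfolding A2_mat_def by simp
    moreover have "sless (A2_mat n g A x y) (CSR n X 1 x y)" using A2_less xy unfolding mp_sless_def by blast
    ultimately have sl: "sless (ereal axy) (CSR n X 1 x y)" using Axy by simp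
    have "CSR n X 1 x y \<le> ereal axy"
    proof (rule ereal_approx_le[OF CSR_ninf[OF subX mcmX xy]])
      fix c assume cc: "ereal c \<le> CSR n X 1 x y"
      obtain L f where f: "vw n X f L" "f 0 = x" "f L = y" "c \<le> ws X f L - lamr * L + lamr * 1"
        using CSR_ub[OF subX mcmX xy cc] by (elim exE conjE) simp
      have fa: "vw n A f L" "ws X f L = ws A f L" using subm_vw[OF subX f(1)] subm_ws[OF subX f(1)] by auto
      have e1: "f L = h 0" "h Lh = f 0" using f(2,3) h(2,3) by auto
      have "ws A f L + ws A h Lh \<le> lamr * (L + Lh)" using closed2[OF fa(1) h(1) e1] .
      moreover have "lamr * real (L + Lh) = lamr * L + lamr * Lh" "lamr * real (Lh + 1) = lamr * Lh + lamr"
        by (simp_all add: distrib_left)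
      ultimately show "c \<le> axy" using f(4) fa(2) h(4) by linarith
    qed
    moreover have "ereal axy \<le> CSR n X 1 x y" using sl unfolding sless_def by blast
    ultimately have "CSR n X 1 x y = ereal axy" by (rule antisym)
    hence "ereal axy = -\<infinity>" using sl unfolding sless_def by metis
    thus ?thesis by simp
  next
    case True
    hence "X x y \<noteq> -\<infinity> \<or> B x y \<noteq> -\<infinity>" unfolding mp_add_def by (metis max_def order.strict_implies_not_eq)
    thus ?thesis
    proof
      assume "X x y \<noteq> -\<infinity>" thus ?thesis using Xsupp unfolding tame_def by blast
    next
      assume "B x y \<noteq> -\<infinity>"
      hence b: "g < x" "g < y" "y mod g = (x + 1) mod g" "B x y = A x y" using Bsupp by auto
      show ?thesis
      proof (cases "y \<le> x + 1")
        case True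
        show ?thesis
        proof (cases "y = x + 1")
          case True
          hence "1 \<le> x \<and> x < n \<and> y = x + 1" using xy by auto
          thus ?thesis unfolding tame_def by blast
        next
          case False
          hence "y \<le> x" using \<open>y \<le> x + 1\<close> by simp
          thus ?thesis using b unfolding tame_def by blast
        qed
      next
        case False
        hence jx: "y > x + 1" by simp
        have cnd: "x > g \<and> y > x + 1 \<and> y mod g = (x + 1) mod g" using b jx by simp
        have sl: "sless (ereal (real (y - x - 1)) * mcm n A + B x y) (mp_pow n X (y - x) x y)"
          using mp[OF bspec[OF bspec[OF ineq xy(1)] xy(2)] cnd] .
        have lhs: "ereal (real (y - x - 1)) * mcm n A + B x y = ereal (real (y - x - 1) * lamr + axy)"
          using b(4) Axy mcm_eq by simp
        have ch: "chr n X (mp_pow n X (y - x)) (y - x)" using chr_pow1 finX unfolding fin_def by blast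
        have "ereal (real (y - x - 1) * lamr + axy) < mp_pow n X (y - x) x y"
          using sl lhs unfolding sless_def by auto
        then obtain v where v: "mp_pow n X (y - x) x y = ereal v" "real (y - x - 1) * lamr + axy < v"
          using chrD1[OF ch xy] by (cases "mp_pow n X (y - x) x y") auto
        obtain f where f: "vw n X f (y - x)" "f 0 = x" "f (y - x) = y" "v \<le> ws X f (y - x)"
          using chrD3[OF ch xy, of v] v by auto
        have fa: "vw n A f (y - x)" "ws X f (y - x) = ws A f (y - x)"
          using subm_vw[OF subX f(1)] subm_ws[OF subX f(1)] by auto
        have e1: "f (y - x) = h 0" "h Lh = f 0" using f(2,3) h(2,3) by auto
        have "ws A f (y - x) + ws A h Lh \<le> lamr * ((y - x) + Lh)" using closed2[OF fa(1) h(1) e1] .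
        moreover have "real (y - x - 1) = real (y - x) - 1" using jx by simp
        moreover have "lamr * real ((y - x) + Lh) = lamr * (y - x) + lamr * Lh" "lamr * real (Lh + 1) = lamr * Lh + lamr"
          by (simp_all add: distrib_left)
        moreover have "real (y - x - 1) * lamr = lamr * (y - x) - lamr"
        proof -
          have r: "real (y - x - 1) = real (y - x) - 1" using jx by simp
          have "real (y - x - 1) * lamr = (real (y - x) - 1) * lamr" by (subst r) (rule refl)
          thus ?thesis by (simp add: algebra_simps)
        qed
        ultimately have False using v f(4) fa(2) h(4) by linarith
        thus ?thesis ..
      qed
    qed
  qed
qed

end

lemma rtrancl_cross:
  assumes "(a, b) \<in> R\<^sup>*" "\<not> Q a" "Q b"
  shows "\<exists>x y. (x, y) \<in> R \<and> \<not> Q x \<and> Q y"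
  using assms by (induction rule: rtrancl_induct) auto

context ctx begin

definition good :: "mpmat \<Rightarrow> bool" where
  "good P \<longleftrightarrow> subm P A \<and> (\<forall>x y. zgarc x y \<longrightarrow> P x y = A x y)"

lemma goodX: "good X" unfolding good_def using subX zgarc_X by blast
lemma goodY: "good Y" unfolding good_def using subY zgarc_Y by blast

lemma good_mcm: "good P \<Longrightarrow> mcm n P = ereal lamr" unfolding good_def using mcm_sub by blast

lemma crit_arc_nodes: "crit_arc n P x y \<Longrightarrow> crit_node n P x \<and> crit_node n P y"
proof -
  assume "crit_arc n P x y"
  then obtain c l where c: "is_crit_cycle n P c" "l < wlen c" "c ! l = x" "c ! Suc l = y"
    unfolding crit_arc_def by blast
  have "Suc l < length c" using c(2) unfolding wlen_def by simp
  hence "x \<in> set c" "y \<in> set c" using c(3,4) nth_mem[of l c] nth_mem[of "Suc l" c] by auto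
  thus ?thesis unfolding crit_node_def using c(1) by blast
qed

definition zn :: "nat \<Rightarrow> nat" where "zn k = k mod n + 1"

lemma zn_mod: "k mod n < n" using n_pos by simp
lemma zn_lt: "k < n \<Longrightarrow> zn k = k + 1" unfolding zn_def by simp
lemma zn_n: "zn n = 1" unfolding zn_def by simp
lemma zn_range: "zn k \<in> {1..n}" unfolding zn_def using zn_mod[of k] by simp
lemma zn_Suc: "zn (Suc k) = (if zn k < n then zn k + 1 else 1)"
  unfolding zn_def using zn_mod[of k] by (auto simp: mod_Suc)

definition znl :: "nat list" where "znl = map zn [0..<Suc n]"

lemma zn_X: "X (zn k) (zn (Suc k)) = A (zn k) (zn (Suc k))"
  by (rule Xsupp_eq) (use zn_range[of k] zn_Suc[of k] in auto)

definition case1 :: bool where "case1 \<longleftrightarrow> is_crit_cycle n X znl"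

lemma case1_of_crit_n1:
  assumes ca: "crit_arc n A n 1"
  shows case1
proof -
  obtain m p where p: "m \<ge> 1" "vw n A p m" "p 0 = 1" "p (m - 1) = n" "p m = 1" "inj_on p {0..<m}"
    "\<forall>k<m. crit_arc n A (p k) (p (Suc k))" "ws A p m = lamr * m"
    using ROT[OF ca] by blast
  have claim: "\<forall>j\<le>k. j < m \<and> p j = j + 1" if "k \<le> n - 1" for k
    using that
  proof (induction k)
    case 0 thus ?case using p by simp
  next
    case (Suc k)
    hence IH: "\<forall>j\<le>k. j < m \<and> p j = j + 1" by simp
    have pk: "p k = k + 1" "k < m" using IH by auto
    have "k \<noteq> m - 1" using pk p(4) Suc.prems by auto
    hence km: "Suc k < m" using pk by simp
    have "crit_arc n A (p k) (p (Suc k))" using p(7) pk(2) by blast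
    hence "tame (p k) (p (Suc k))" by (rule TAME)
    hence t: "tame (Suc k) (p (Suc k))" using pk(1) by simp
    have inj0: "i = j" if "i < m" "j < m" "p i = p j" for i j
      using inj_onD[OF p(6), of i j] that by auto
    have "p (Suc k) = Suc k + 1"
    proof -
      from t consider (a) "p (Suc k) = Suc k + 1" | (b) "Suc k = n" | (c) "Suc k = g" "p (Suc k) = 1"
        | (d) "g < p (Suc k)" "p (Suc k) \<le> Suc k"
        unfolding tame_def by blast
      thus ?thesis
      proof cases
        case a thus ?thesis .
      next
        case b thus ?thesis using Suc.prems n_pos by simp
      next
        case c
        hence "p (Suc k) = p 0" using p(3) by simp
        hence "Suc k = 0" using inj0[of "Suc k" 0] km by simp
        thus ?thesis by simp
      next
        case d
        define y where "y = p (Suc k)"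
        have y1: "y - 1 \<le> k" "1 \<le> y" using d g_pos y_def by auto
        have "y - 1 < m \<and> p (y - 1) = y - 1 + 1" using IH y1(1) by blast
        hence "p (y - 1) = p (Suc k)" "y - 1 < m" using y1(2) y_def by auto
        hence "y - 1 = Suc k" using inj0 km by blast
        thus ?thesis using y1 by simp
      qed
    qed
    thus ?case using IH km le_Suc_eq by auto
  qed
  have cl: "\<forall>j\<le>n - 1. j < m \<and> p j = j + 1" using claim by blast
  hence "p (n - 1) = n" using n_pos by simp
  hence "p (n - 1) = p (m - 1)" using p(4) by simp
  moreover have a1: "n - 1 < m" using cl by blast
  ultimately have "n - 1 = m - 1" using inj_onD[OF p(6)] p(1) by simp
  hence mn: "m = n" using p(1) n_pos by simp
  have eq: "p k = zn k" if "k \<le> n" for k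
  proof (cases "k = n")
    case True thus ?thesis using p(5) mn zn_n by simp
  next
    case False thus ?thesis using cl that zn_lt by simp
  qed
  have vA: "vw n A zn n" using p(2) mn vw_cong[of n p zn n A] eq by simp
  have wA: "ws A zn n = lamr * n" using p(8) mn ws_cong[of n p zn A] eq by simp
  have vX: "vw n X zn n" using vA zn_X unfolding vw_def by simp
  have wX: "ws X zn n = lamr * n" using wA zn_X unfolding ws_def by simp
  have w: "is_walk n X znl" and wl: "wlen znl = n" unfolding znl_def using list_walk[OF vX n_pos] by auto
  have "hd znl = zn 0" unfolding znl_def by (simp add: hd_map del: upt_Suc)
  moreover have "last znl = zn n" unfolding znl_def by simp
  moreover have "butlast znl = map zn [0..<n]" unfolding znl_def by simp
  moreover have "inj_on zn {0..<n}" using zn_lt by (intro inj_onI) auto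
  ultimately have cy: "is_cycle n X znl" using w zn_n unfolding is_cycle_def
    by (simp add: distinct_map zn_def)
  have "cmean X znl = ereal lamr" unfolding znl_def using cmean_map[OF finX vX n_pos] wX n_pos by simp
  thus ?thesis unfolding case1_def is_crit_cycle_def using cy mcmX by simp
qed

end

context ctx begin
lemma crit1: "crit_node n A 1"
  using crit_arc_nodes[of A g 1] cyc by auto

lemma case2_nodes:
  assumes "\<not> case1" "crit_node n A v"
  shows "v \<le> g"
proof (rule ccontr)
  assume "\<not> v \<le> g"
  hence "(v, 1) \<in> (crit_rel n A)\<^sup>*" using sc assms(2) crit1 unfolding crit_strongly_connected_def by blast
  then obtain x y where xy: "(x, y) \<in> crit_rel n A" "\<not> x \<le> g" "y \<le> g"
    using rtrancl_cross[of v 1 "crit_rel n A" "\<lambda>z. z \<le> g"] \<open>\<not> v \<le> g\<close> g_pos by auto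
  have ca: "crit_arc n A x y" using xy unfolding crit_rel_def by auto
  have "x = n \<and> y = 1" using TAME[OF ca] xy unfolding tame_def by auto
  thus False using case1_of_crit_n1 ca assms(1) by simp
qed

lemma case2_arc:
  assumes "\<not> case1" "good P" "crit_arc n P x y"
  shows "zgarc x y"
proof -
  have s: "subm P A" "mcm n P = ereal lamr" using assms(2) good_mcm unfolding good_def by auto
  have ca: "crit_arc n A x y" using critarc_sub[OF s assms(3)] .
  have "x \<le> g" "y \<le> g" using crit_arc_nodes[OF ca] case2_nodes[OF assms(1)] by auto
  moreover have "1 \<le> x" "1 \<le> y" using crit_arc_props[OF ca] by auto
  ultimately show ?thesis using TAME[OF ca] g_le unfolding tame_def zgarc_def by auto
qed

lemma case2_node:
  assumes "\<not> case1" "good P"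
  shows "crit_node n P v \<longleftrightarrow> 1 \<le> v \<and> v \<le> g"
proof
  have s: "subm P A" "mcm n P = ereal lamr" using assms(2) good_mcm unfolding good_def by auto
  assume "crit_node n P v"
  hence "crit_node n A v" using critnode_sub[OF s] by blast
  moreover obtain c where "is_crit_cycle n A c" "v \<in> set c" using \<open>crit_node n A v\<close> unfolding crit_node_def by blast
  ultimately have "v \<le> g" "v \<in> {1..n}" using case2_nodes[OF assms(1)] crit_cycle_mem by blast+
  thus "1 \<le> v \<and> v \<le> g" by simp
next
  assume v: "1 \<le> v \<and> v \<le> g"
  have "zgarc v (if v < g then v + 1 else 1)" unfolding zgarc_def using v by simp
  thus "crit_node n P v" using crit_arc_nodes zgarc_P_crit assms(2) unfolding good_def by blast
qed

end

context ctx begin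
lemma zg_reach0: "(zg k, zg (k + j)) \<in> {(x, y). zgarc x y}\<^sup>*"
proof (induction j)
  case 0 thus ?case by simp
next
  case (Suc j)
  have a: "(zg (k + j), zg (Suc (k + j))) \<in> {(x, y). zgarc x y}" using zg_arc by simp
  show ?case using rtrancl_into_rtrancl[OF Suc.IH a] by simp
qed

lemma zg_reach:
  assumes "1 \<le> a" "a \<le> g" "1 \<le> b" "b \<le> g"
  shows "(a, b) \<in> {(x, y). zgarc x y}\<^sup>*"
proof -
  have a: "zg (a - 1) = a" "zg (b - 1) = b" using zg_lt assms by auto
  have "(zg (a - 1), zg (a - 1 + (g - (a - 1)))) \<in> {(x, y). zgarc x y}\<^sup>*" by (rule zg_reach0)
  moreover have "zg (a - 1 + (g - (a - 1))) = zg 0" using assms zg_g by (simp add: zg_def)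
  moreover have "(zg 0, zg (0 + (b - 1))) \<in> {(x, y). zgarc x y}\<^sup>*" by (rule zg_reach0)
  ultimately show ?thesis using a by simp
qed

lemma res_list:
  assumes "\<forall>l < m. (c ! Suc l) mod g = (c ! l + 1) mod g"
  shows "(c ! m) mod g = (c ! 0 + m) mod g"
  using assms
proof (induction m)
  case 0 thus ?case by simp
next
  case (Suc m)
  hence "(c ! m) mod g = (c ! 0 + m) mod g" by simp
  moreover have "(c ! Suc m) mod g = (c ! m + 1) mod g" using Suc.prems by simp
  ultimately have "(c ! Suc m) mod g = Suc ((c ! 0 + m) mod g) mod g"
    by (metis Suc_eq_plus1 mod_Suc_eq)
  also have "\<dots> = Suc (c ! 0 + m) mod g" by (rule mod_Suc_eq)
  finally show ?case by simp
qed

lemma zgarc_res: "zgarc x y \<Longrightarrow> y mod g = (x + 1) mod g"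
proof -
  assume z: "zgarc x y"
  show ?thesis
  proof (cases "x < g")
    case True thus ?thesis using z unfolding zgarc_def by simp
  next
    case False
    hence "x = g" "y = 1" using z unfolding zgarc_def by auto
    thus ?thesis using mod_add_self1[of g 1] by simp
  qed
qed

lemma case2_cyc:
  assumes "\<not> case1" "good P"
  shows "cyclicity_crit n P = g"
proof -
  have rel: "crit_rel n P = {(x, y). zgarc x y}"
  proof -
    have ce: "crit_arc n P x y \<longleftrightarrow> zgarc x y" for x y
      using case2_arc[OF assms, of x y] zgarc_P_crit[of P x y] assms(2) unfolding good_def by blast
    show ?thesis unfolding crit_rel_def
    proof (rule set_eqI)
      fix z :: "nat \<times> nat" show "z \<in> {(x, y). crit_arc n P x y} \<longleftrightarrow> z \<in> {(x, y). zgarc x y}"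
        using ce by (cases z) simp
    qed
  qed
  have G: "Gcd (comp_cycle_lens n P C) = g" if C: "C \<in> crit_comps n P" for C
  proof -
    obtain i where i: "crit_node n P i" "C = crit_comp n P i" using C unfolding crit_comps_def by blast
    have i1: "1 \<le> i" "i \<le> g" using case2_node[OF assms] i by auto
    have sub: "{1..g} \<subseteq> C"
      unfolding i(2) crit_comp_def rel using case2_node[OF assms] zg_reach i1 by auto
    have "g \<in> comp_cycle_lens n P C"
    proof -
      have "is_cycle n P zgl" using zgl_crit assms(2) unfolding good_def is_crit_cycle_def by blast
      moreover have "set zgl \<subseteq> C" unfolding zgl_def using zg_range sub by auto
      moreover have "\<forall>l<wlen zgl. crit_arc n P (zgl ! l) (zgl ! Suc l)"
      proof (intro allI impI)
        fix l assume "l < wlen zgl"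
        hence "zgl ! l = zg l" "zgl ! Suc l = zg (Suc l)" using zgl_nth zgl_wlen by auto
        moreover have "crit_arc n P (zg l) (zg (Suc l))"
          using zgarc_P_crit[OF _ _ zg_arc] assms(2) unfolding good_def by blast
        ultimately show "crit_arc n P (zgl ! l) (zgl ! Suc l)" by simp
      qed
      ultimately have "g = wlen zgl \<and> is_cycle n P zgl \<and> set zgl \<subseteq> C \<and> (\<forall>l<wlen zgl. crit_arc n P (zgl ! l) (zgl ! Suc l))"
        using zgl_wlen by simp
      note H = this
      show ?thesis unfolding comp_cycle_lens_def by (rule CollectI, rule exI[of _ zgl], rule H)
    qed
    moreover have "g dvd s" if sin: "s \<in> comp_cycle_lens n P C" for s
    proof -
      obtain c where c: "s = wlen c" "is_cycle n P c" "\<forall>l<wlen c. crit_arc n P (c ! l) (c ! Suc l)"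
        using sin unfolding comp_cycle_lens_def by blast
      have "\<forall>l<wlen c. (c ! Suc l) mod g = (c ! l + 1) mod g"
        using c(3) case2_arc[OF assms] zgarc_res by blast
      hence r: "(c ! wlen c) mod g = (c ! 0 + wlen c) mod g" by (rule res_list)
      have w: "is_walk n P c" using c(2) unfolding is_cycle_def by auto
      have "length c = Suc (wlen c)" using w unfolding is_walk_def wlen_def by auto
      moreover have "hd c = last c" using c(2) unfolding is_cycle_def by auto
      moreover have "c \<noteq> []" using \<open>length c = Suc (wlen c)\<close> by auto
      ultimately have "c ! wlen c = c ! 0" by (simp add: hd_conv_nth last_conv_nth)
      hence "(c ! 0 + wlen c) mod g = c ! 0 mod g" using r by simp
      hence "g dvd (c ! 0 + wlen c) - c ! 0" using mod_eq_dvd_iff_nat[of "c ! 0" "c ! 0 + wlen c" g] by simp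
      thus ?thesis using c(1) by simp
    qed
    ultimately have "Gcd (comp_cycle_lens n P C) dvd g" "g dvd Gcd (comp_cycle_lens n P C)"
      by (auto intro: Gcd_dvd Gcd_greatest)
    thus ?thesis by (rule dvd_antisym)
  qed
  have ne: "crit_comps n P \<noteq> {}" using case2_node[OF assms, of 1] g_pos unfolding crit_comps_def by auto
  have "(\<lambda>C. Gcd (comp_cycle_lens n P C)) ` crit_comps n P = {g}" using G ne by auto
  thus ?thesis unfolding cyclicity_crit_def by simp
qed

end

lemma subm_refl: "subm P P" unfolding subm_def by simp

context ctx begin

definition phi :: "nat \<Rightarrow> real" where "phi x = ws A zn (x - 1) - lamr * (x - 1)"

definition mid :: "mpmat \<Rightarrow> bool" where
  "mid P \<longleftrightarrow> good P \<and> subm X P \<and> subm P Y"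

lemma midX: "mid X" unfolding mid_def using goodX subXY subm_refl by blast
lemma midY: "mid Y" unfolding mid_def using goodY subXY subm_refl by blast

lemma zn_arc_fin: "case1 \<Longrightarrow> X (zn k) (zn (Suc k)) \<noteq> -\<infinity>"
proof -
  assume c: case1
  have w: "is_walk n X znl" using c unfolding case1_def is_crit_cycle_def is_cycle_def by auto
  have len: "length znl = Suc n" unfolding znl_def by simp
  have km: "k mod n < n" by (rule zn_mod)
  have nth: "znl ! i = zn i" if "i \<le> n" for i using that unfolding znl_def
    by (simp add: nth_map_upt less_Suc_eq_le del: upt_Suc)
  have "X (znl ! (k mod n)) (znl ! Suc (k mod n)) \<noteq> -\<infinity>"
    using w km len unfolding is_walk_def by simp
  moreover have "znl ! (k mod n) = zn k" using nth[of "k mod n"] km unfolding zn_def by simp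
  moreover have "znl ! Suc (k mod n) = zn (Suc k)" using nth[of "Suc (k mod n)"] km unfolding zn_def
    by (simp add: mod_Suc)
  ultimately show ?thesis by simp
qed

lemma vw_zn: "case1 \<Longrightarrow> vw n X zn L"
  unfolding vw_def using zn_range zn_arc_fin by blast

lemma zn_ws: "case1 \<Longrightarrow> ws A zn n = lamr * n"
proof -
  assume c: case1
  have w: "is_walk n X znl" and cm: "cmean X znl = mcm n X"
    using c unfolding case1_def is_crit_cycle_def is_cycle_def by auto
  have "cmean X znl = ereal (ws X zn n / n)" unfolding znl_def by (rule cmean_map[OF finX vw_zn[OF c] n_pos])
  hence "ws X zn n / n = lamr" using cm mcmX by simp
  hence "ws X zn n = lamr * n" using n_pos by (simp add: divide_eq_eq)
  thus ?thesis using zn_X unfolding ws_def by simp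
qed

lemma phi1: "phi 1 = 0" unfolding phi_def by simp

lemma tight_succ:
  assumes c: case1 and x: "1 \<le> x" "x \<le> n"
  shows "real_of_ereal (A x (if x < n then x + 1 else 1)) - lamr = phi (if x < n then x + 1 else 1) - phi x"
proof (cases "x < n")
  case True
  have "ws A zn x = ws A zn (x - 1) + real_of_ereal (A (zn (x - 1)) (zn x))"
    using ws_Suc[of A zn "x - 1"] x by simp
  moreover have "zn (x - 1) = x" "zn x = x + 1" using zn_lt True x by auto
  ultimately show ?thesis using True x unfolding phi_def by (simp add: of_nat_diff algebra_simps)
next
  case False
  hence xn: "x = n" using x by simp
  have "ws A zn n = ws A zn (n - 1) + real_of_ereal (A (zn (n - 1)) (zn n))"
    using ws_Suc[of A zn "n - 1"] n_pos by simp
  moreover have "zn (n - 1) = n" "zn n = 1" using zn_lt zn_n n_pos by auto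
  ultimately show ?thesis using xn zn_ws[OF c] n_pos unfolding phi_def by (simp add: of_nat_diff algebra_simps)
qed

lemma tight_g: "real_of_ereal (A g 1) - lamr = phi 1 - phi g"
proof -
  have "ws A zg g = ws A zg (g - 1) + real_of_ereal (A (zg (g - 1)) (zg g))"
    using ws_Suc[of A zg "g - 1"] g_pos by simp
  moreover have "zg (g - 1) = g" "zg g = 1" using zg_lt zg_g g_pos by auto
  moreover have "ws A zg (g - 1) = ws A zn (g - 1)"
  proof (rule ws_cong)
    fix k assume "k \<le> g - 1"
    hence "k < g" "k < n" using g_pos g_le by auto
    thus "zg k = zn k" using zg_lt zn_lt by simp
  qed
  ultimately show ?thesis using ZG g_pos unfolding phi_def by (simp add: of_nat_diff algebra_simps)
qed

lemma tightX:
  assumes c: case1 and "X x y \<noteq> -\<infinity>"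
  shows "real_of_ereal (X x y) - lamr = phi y - phi x"
proof -
  have s: "(1 \<le> x \<and> x < n \<and> y = x + 1) \<or> (x = n \<and> y = 1) \<or> (x = g \<and> y = 1)" using Xsupp assms(2) by blast
  have e: "X x y = A x y" by (rule Xsupp_eq[OF s])
  show ?thesis using s
  proof (elim disjE)
    assume "1 \<le> x \<and> x < n \<and> y = x + 1" thus ?thesis using tight_succ[OF c, of x] e by auto
  next
    assume "x = n \<and> y = 1" thus ?thesis using tight_succ[OF c, of n] e n_pos by auto
  next
    assume "x = g \<and> y = 1" thus ?thesis using tight_g e by auto
  qed
qed

lemma telX: "case1 \<Longrightarrow> vw n X f L \<Longrightarrow> ws X f L - lamr * L = phi (f L) - phi (f 0)"
proof (induction L)
  case 0 thus ?case by simp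
next
  case (Suc L)
  have "X (f L) (f (Suc L)) \<noteq> -\<infinity>" using Suc.prems unfolding vw_def by auto
  hence "real_of_ereal (X (f L) (f (Suc L))) - lamr = phi (f (Suc L)) - phi (f L)" using tightX Suc.prems by blast
  thus ?case using Suc vw_le[of n X f "Suc L" L] ws_Suc[of X f L] by (simp add: algebra_simps)
qed

lemma Xpow_ub:
  assumes c: case1 and xy: "x \<in> {1..n}" "y \<in> {1..n}"
  shows "mp_pow n X L x y \<le> ereal (phi y - phi x + lamr * L)"
proof -
  have ch: "chr n X (mp_pow n X L) L" using chr_pow1 finX unfolding fin_def by blast
  show ?thesis
  proof (rule ereal_approx_le[OF chrD1[OF ch xy]])
    fix c assume "ereal c \<le> mp_pow n X L x y"
    then obtain f where f: "vw n X f L" "f 0 = x" "f L = y" "c \<le> ws X f L" using chrD3[OF ch xy] by blast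
    thus "c \<le> phi y - phi x + lamr * L" using telX[OF c f(1)] by simp
  qed
qed

lemma tightY:
  assumes c: case1 and xy: "x \<in> {1..n}" "y \<in> {1..n}" and yf: "Y x y \<noteq> -\<infinity>"
  shows "real_of_ereal (Y x y) - lamr \<le> phi y - phi x"
proof (cases "X x y \<noteq> -\<infinity>")
  case True
  hence "Y x y = X x y" using subXY unfolding subm_def by metis
  thus ?thesis using tightX[OF c True] by simp
next
  case False
  hence Bf: "B x y \<noteq> -\<infinity>" using Ysupp[OF yf] by blast
  hence b: "g < x" "g < y" "y mod g = (x + 1) mod g" "B x y = A x y" using Bsupp by auto
  have YA: "Y x y = A x y" using subY yf unfolding subm_def by metis
  define b0 where "b0 = real_of_ereal (A x y)"
  have Ab: "A x y = ereal b0" using b(4) Bf entries xy b0_def by (cases "A x y") auto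
  show ?thesis
  proof (cases "y \<le> x")
    case True
    define h where "h = (\<lambda>k::nat. if k = 0 then x else y)"
    have vh: "vw n A h 1" unfolding vw_def h_def using xy Ab by (auto simp: le_Suc_eq)
    have wh: "ws A h 1 = b0" unfolding ws_def h_def using Ab by simp
    have vz: "vw n A zn (x - 1)" using subm_vw[OF subX vw_zn[OF c]] .
    have "y - 1 \<le> x - 1" using True by simp
    hence "vw n A (sh zn (y - 1)) (x - 1 - (y - 1))" by (rule vw_sh[OF vz])
    moreover have "x - 1 - (y - 1) = x - y" using xy by simp
    ultimately have vs: "vw n A (sh zn (y - 1)) (x - y)" by simp
    have zx: "zn (x - 1) = x" using zn_lt[of "x - 1"] xy by auto
    have zy: "zn (y - 1) = y" using zn_lt[of "y - 1"] xy by auto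
    have "x - y + (y - 1) = x - 1" using xy True by auto
    hence e1: "sh zn (y - 1) (x - y) = h 0" using zx unfolding h_def by simp
    have e2: "h 1 = sh zn (y - 1) 0" using zy unfolding h_def by simp
    have "ws A (sh zn (y - 1)) (x - y) + ws A h 1 \<le> lamr * ((x - y) + 1)"
      using closed2[OF vs vh e1 e2] by (simp del: sh_simp)
    moreover have "ws A zn (x - 1) = ws A zn (y - 1) + ws A (sh zn (y - 1)) (x - y)"
      using ws_split[of "y - 1" "x - 1" A zn] True xy by (simp add: diff_diff_cancel)
    ultimately show ?thesis using YA Ab wh True xy unfolding phi_def by (simp add: of_nat_diff algebra_simps)
  next
    case False
    show ?thesis
    proof (cases "y = x + 1")
      case True
      hence "X x y \<noteq> -\<infinity>" using xy Ab b unfolding A1_mat_def by auto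
      thus ?thesis using \<open>\<not> X x y \<noteq> -\<infinity>\<close> by simp
    next
      case False
      hence jx: "y > x + 1" using \<open>\<not> y \<le> x\<close> by simp
      have sl: "sless (ereal (real (y - x - 1)) * mcm n A + B x y) (mp_pow n X (y - x) x y)"
        using ineq xy b jx by blast
      have "ereal (real (y - x - 1) * lamr + b0) < mp_pow n X (y - x) x y"
        using sl Ab b(4) mcm_eq unfolding sless_def by auto
      also have "\<dots> \<le> ereal (phi y - phi x + lamr * (y - x))" by (rule Xpow_ub[OF c xy])
      finally have "real (y - x - 1) * lamr + b0 < phi y - phi x + lamr * (y - x)" by simp
      moreover have "real (y - x - 1) = real (y - x) - 1" using jx by simp
      ultimately show ?thesis using YA Ab by (simp add: algebra_simps)
    qed
  qed
qed

lemma telY: "case1 \<Longrightarrow> vw n Y f L \<Longrightarrow> ws Y f L - lamr * L \<le> phi (f L) - phi (f 0)"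
proof (induction L)
  case 0 thus ?case by simp
next
  case (Suc L)
  have "Y (f L) (f (Suc L)) \<noteq> -\<infinity>" "f L \<in> {1..n}" "f (Suc L) \<in> {1..n}" using Suc.prems unfolding vw_def by auto
  hence "real_of_ereal (Y (f L) (f (Suc L))) - lamr \<le> phi (f (Suc L)) - phi (f L)" using tightY Suc.prems by blast
  thus ?case using Suc vw_le[of n Y f "Suc L" L] ws_Suc[of Y f L] by (simp add: algebra_simps)
qed

lemma telP: "case1 \<Longrightarrow> subm P Y \<Longrightarrow> vw n P f L \<Longrightarrow> ws P f L - lamr * L \<le> phi (f L) - phi (f 0)"
proof -
  assume c: case1 and s: "subm P Y" and v: "vw n P f L"
  have "vw n Y f L" using subm_vw[OF s v] .
  moreover have "ws P f L = ws Y f L" using subm_ws[OF s v] .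
  ultimately show ?thesis using telY[OF c] by simp
qed

definition sw :: "nat \<Rightarrow> nat \<Rightarrow> nat" where "sw a k = zn (a - 1 + k)"

lemma sw_0: "a \<in> {1..n} \<Longrightarrow> sw a 0 = a" unfolding sw_def using zn_lt by auto

lemma sw_end:
  assumes "a \<in> {1..n}" "b \<in> {1..n}"
  shows "sw a ((b + n - a) mod n) = b"
proof -
  have "(a - 1 + (b + n - a) mod n) mod n = (a - 1 + (b + n - a)) mod n" by (simp add: mod_add_right_eq)
  also have "a - 1 + (b + n - a) = (b - 1) + n" using assms by auto
  also have "((b - 1) + n) mod n = (b - 1) mod n" by (rule mod_add_self2)
  also have "(b - 1) mod n = b - 1" using assms by (intro mod_less) auto
  finally show ?thesis unfolding sw_def zn_def using assms by simp
qed

lemma sw_Suc: "sw a (Suc k) = zn (Suc (a - 1 + k))" unfolding sw_def by simp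

lemma sw_X: "case1 \<Longrightarrow> vw n X (sw a) L"
  unfolding vw_def using zn_range zn_arc_fin unfolding sw_Suc unfolding sw_def by blast

lemma sw_tel: "case1 \<Longrightarrow> a \<in> {1..n} \<Longrightarrow> ws X (sw a) L - lamr * L = phi (sw a L) - phi a"
proof -
  assume c: case1 and a: "a \<in> {1..n}"
  have "ws X (sw a) L - lamr * L = phi (sw a L) - phi (sw a 0)" by (rule telX[OF c sw_X[OF c]])
  thus ?thesis using sw_0[OF a] by simp
qed

end

lemma subm_cycle2:
  assumes "subm Q P" "is_cycle n Q c"
  shows "is_cycle n P c" "cmean Q c = cmean P c"
proof -
  show "is_cycle n P c" using assms unfolding is_cycle_def is_walk_def subm_def by metis
  have "wweight Q c = wweight P c" unfolding wweight_def
    by (rule sum.cong) (use assms in \<open>auto simp: is_cycle_def is_walk_def subm_def wlen_def\<close>)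
  thus "cmean Q c = cmean P c" unfolding cmean_def by simp
qed

context ctx begin

lemma znl_nth: "k \<le> n \<Longrightarrow> znl ! k = zn k"
  unfolding znl_def by (simp add: nth_map_upt less_Suc_eq_le del: upt_Suc)
lemma znl_wlen: "wlen znl = n" unfolding znl_def wlen_def by simp
lemma zn_modk: "zn k = zn (k mod n)" "zn (Suc k) = zn (Suc (k mod n))"
  unfolding zn_def by (auto simp: mod_Suc)

lemma c1_crit: "case1 \<Longrightarrow> mid P \<Longrightarrow> is_crit_cycle n P znl"
proof -
  assume c: case1 and m: "mid P"
  have cX: "is_cycle n X znl" "cmean X znl = ereal lamr" using c mcmX unfolding case1_def is_crit_cycle_def by auto
  have s: "subm X P" using m unfolding mid_def by auto
  show ?thesis unfolding is_crit_cycle_def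
    using subm_cycle2[OF s cX(1)] cX(2) good_mcm m unfolding mid_def by auto
qed

lemma c1_arc: "case1 \<Longrightarrow> mid P \<Longrightarrow> crit_arc n P (zn k) (zn (Suc k))"
proof -
  assume c: case1 and m: "mid P"
  have "k mod n < wlen znl" using zn_mod znl_wlen by simp
  moreover have "znl ! (k mod n) = zn k" "znl ! Suc (k mod n) = zn (Suc k)"
    using znl_nth zn_modk zn_mod[of k] by (auto simp: Suc_leI less_imp_le_nat)
  ultimately show ?thesis unfolding crit_arc_def using c1_crit[OF c m] by blast
qed

lemma c1_node: "case1 \<Longrightarrow> mid P \<Longrightarrow> v \<in> {1..n} \<Longrightarrow> crit_node n P v"
  using crit_arc_nodes[OF c1_arc, of P "v - 1"] zn_lt[of "v - 1"] by auto

lemma zn_reach: "case1 \<Longrightarrow> mid P \<Longrightarrow> (zn k, zn (k + j)) \<in> (crit_rel n P)\<^sup>*"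
proof (induction j)
  case 0 thus ?case by simp
next
  case (Suc j)
  have "(zn (k + j), zn (Suc (k + j))) \<in> crit_rel n P" using c1_arc[OF Suc.prems] unfolding crit_rel_def by simp
  thus ?case using Suc by simp
qed

lemma c1_reach:
  assumes c: case1 and m: "mid P" and ab: "a \<in> {1..n}" "b \<in> {1..n}"
  shows "(a, b) \<in> (crit_rel n P)\<^sup>*"
proof -
  have "(zn (a - 1), zn (a - 1 + (n - (a - 1)))) \<in> (crit_rel n P)\<^sup>*" by (rule zn_reach[OF c m])
  moreover have "zn (a - 1 + (n - (a - 1))) = zn 0" using ab zn_n by (simp add: zn_def)
  moreover have "(zn 0, zn (0 + (b - 1))) \<in> (crit_rel n P)\<^sup>*" by (rule zn_reach[OF c m])
  ultimately show ?thesis using zn_lt ab by auto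
qed

lemma c1_cyc:
  assumes c: case1 and m: "mid P"
  shows "cyclicity_crit n P = 1"
proof -
  have gP: "good P" using m unfolding mid_def by auto
  have G: "Gcd (comp_cycle_lens n P C) = 1" if C: "C \<in> crit_comps n P" for C
  proof -
    obtain i where i: "crit_node n P i" "C = crit_comp n P i" using C unfolding crit_comps_def by blast
    have iin: "i \<in> {1..n}" using i(1) crit_cycle_mem unfolding crit_node_def by blast
    have sub: "{1..n} \<subseteq> C"
      unfolding i(2) crit_comp_def using c1_node[OF c m] c1_reach[OF c m] iin by auto
    have "n \<in> comp_cycle_lens n P C"
    proof -
      have "is_cycle n P znl" using c1_crit[OF c m] unfolding is_crit_cycle_def by blast
      moreover have "set znl \<subseteq> C" unfolding znl_def using zn_range sub by auto
      moreover have "\<forall>l<wlen znl. crit_arc n P (znl ! l) (znl ! Suc l)"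
      proof (intro allI impI)
        fix l assume "l < wlen znl"
        hence "znl ! l = zn l" "znl ! Suc l = zn (Suc l)" using znl_nth znl_wlen by auto
        thus "crit_arc n P (znl ! l) (znl ! Suc l)" using c1_arc[OF c m, of l] by simp
      qed
      ultimately have "n = wlen znl \<and> is_cycle n P znl \<and> set znl \<subseteq> C \<and> (\<forall>l<wlen znl. crit_arc n P (znl ! l) (znl ! Suc l))"
        using znl_wlen by simp
      note H = this
      show ?thesis unfolding comp_cycle_lens_def by (rule CollectI, rule exI[of _ znl], rule H)
    qed
    moreover have "g \<in> comp_cycle_lens n P C"
    proof -
      have "is_cycle n P zgl" using zgl_crit gP unfolding good_def is_crit_cycle_def by blast
      moreover have "set zgl \<subseteq> C"
      proof
        fix v assume "v \<in> set zgl"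
        then obtain k where "v = zg k" unfolding zgl_def by auto
        hence "v \<in> {1..g}" using zg_range by simp
        thus "v \<in> C" using sub g_le by auto
      qed
      moreover have "\<forall>l<wlen zgl. crit_arc n P (zgl ! l) (zgl ! Suc l)"
      proof (intro allI impI)
        fix l assume "l < wlen zgl"
        hence "zgl ! l = zg l" "zgl ! Suc l = zg (Suc l)" using zgl_nth zgl_wlen by auto
        moreover have "crit_arc n P (zg l) (zg (Suc l))"
          using zgarc_P_crit[OF _ _ zg_arc] gP unfolding good_def by blast
        ultimately show "crit_arc n P (zgl ! l) (zgl ! Suc l)" by simp
      qed
      ultimately have "g = wlen zgl \<and> is_cycle n P zgl \<and> set zgl \<subseteq> C \<and> (\<forall>l<wlen zgl. crit_arc n P (zgl ! l) (zgl ! Suc l))"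
        using zgl_wlen by simp
      note H = this
      show ?thesis unfolding comp_cycle_lens_def by (rule CollectI, rule exI[of _ zgl], rule H)
    qed
    ultimately have "Gcd (comp_cycle_lens n P C) dvd gcd g n" using Gcd_dvd by (meson gcd_greatest)
    thus ?thesis using cop by simp
  qed
  have ne: "crit_comps n P \<noteq> {}" using c1_node[OF c m, of 1] n_pos unfolding crit_comps_def by auto
  have "(\<lambda>C. Gcd (comp_cycle_lens n P C)) ` crit_comps n P = {1}" using G ne by auto
  thus ?thesis unfolding cyclicity_crit_def by simp
qed

lemma c1_M:
  assumes c: case1 and m: "mid P" and ab: "a \<in> {1..n}" "b \<in> {1..n}"
  shows "M_mat n P a b = ereal (phi b - phi a)"
proof -
  have gP: "good P" "subm X P" "subm P Y" using m unfolding mid_def by auto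
  have mc: "mcm n P = ereal lamr" using good_mcm gP by blast
  have fP: "fin n P" using subm_fin gP finA unfolding good_def by blast
  have cy: "cyclicity_crit n P = 1" using c1_cyc[OF c m] .
  show ?thesis
  proof (rule antisym)
    show "M_mat n P a b \<le> ereal (phi b - phi a)"
    proof (rule ereal_approx_le[OF M_ninf[OF mc fP ab]])
      fix x assume "ereal x \<le> M_mat n P a b"
      then obtain mm f where f: "vw n P f (mm * cyclicity_crit n P)" "f 0 = a" "f (mm * cyclicity_crit n P) = b"
        "x \<le> ws P f (mm * cyclicity_crit n P) - lamr * (mm * cyclicity_crit n P)"
        using M_wit[OF mc fP ab] by blast
      thus "x \<le> phi b - phi a" using telP[OF c gP(3) f(1)] by simp
    qed
    define L where "L = (b + n - a) mod n"
    have Ln: "L < n" unfolding L_def using zn_mod .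
    have vP: "vw n P (sw a) (L * cyclicity_crit n P)" using subm_vw[OF gP(2) sw_X[OF c]] cy by simp
    have "ereal (ws P (sw a) (L * cyclicity_crit n P) - lamr * (L * cyclicity_crit n P)) \<le>
       M_mat n P (sw a 0) (sw a (L * cyclicity_crit n P))" by (rule M_ge[OF mc fP Ln vP])
    moreover have "ws P (sw a) L = ws X (sw a) L" using subm_ws[OF gP(2) sw_X[OF c]] by simp
    ultimately show "ereal (phi b - phi a) \<le> M_mat n P a b"
      using sw_tel[OF c ab(1), of L] sw_0[OF ab(1)] sw_end[OF ab] cy unfolding L_def by simp
  qed
qed

lemma c1_CSR:
  assumes c: case1 and m: "mid P" and ab: "a \<in> {1..n}" "b \<in> {1..n}"
  shows "CSR n P t a b = ereal (lamr * t + phi b - phi a)"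
proof -
  have gP: "good P" "subm X P" "subm P Y" "subm P A" using m unfolding mid_def good_def by auto
  have mc: "mcm n P = ereal lamr" using good_mcm gP by blast
  show ?thesis
  proof (rule antisym)
    show "CSR n P t a b \<le> ereal (lamr * t + phi b - phi a)"
    proof (rule ereal_approx_le[OF CSR_ninf[OF gP(4) mc ab]])
      fix x assume "ereal x \<le> CSR n P t a b"
      then obtain L f where f: "vw n P f L" "f 0 = a" "f L = b" "x \<le> ws P f L - lamr * L + lamr * t"
        using CSR_ub[OF gP(4) mc ab] by blast
      thus "x \<le> lamr * t + phi b - phi a" using telP[OF c gP(3) f(1)] by simp
    qed
    define l where "l = sw a t"
    have l1: "l \<in> {1..n}" unfolding l_def sw_def by (rule zn_range)
    have SP: "S_mat n P (zn k) (zn (Suc k)) = X (zn k) (zn (Suc k))" for k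
    proof -
      have "X (zn k) (zn (Suc k)) \<noteq> -\<infinity>" using vw_zn[OF c, of "Suc k"] unfolding vw_def by auto
      hence "P (zn k) (zn (Suc k)) = X (zn k) (zn (Suc k))" using gP(2) unfolding subm_def by metis
      thus ?thesis unfolding S_mat_def using c1_arc[OF c m] by simp
    qed
    have SP': "S_mat n P (sw a k) (sw a (Suc k)) = X (sw a k) (sw a (Suc k))" for k
      unfolding sw_Suc unfolding sw_def by (rule SP)
    have vS: "vw n (S_mat n P) (sw a) t" using sw_X[OF c] SP' unfolding vw_def by simp
    have wS: "ws (S_mat n P) (sw a) t = ws X (sw a) t" unfolding ws_def using SP' by simp
    have wt: "ws X (sw a) t = lamr * t + phi l - phi a" using sw_tel[OF c ab(1), of t] l_def by simp
    have St: "ereal (lamr * t + phi l - phi a) \<le> mp_pow n (S_mat n P) t a l"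
      using chrD2[OF St_chr[of P t, OF gP(4)] vS] wS wt sw_0[OF ab(1)] l_def by simp
    have Ca: "C_mat n P a a = ereal 0" unfolding C_mat_def using c1_node[OF c m ab(1)] c1_M[OF c m ab(1) ab(1)] by simp
    have Rl: "R_mat n P l b = ereal (phi b - phi l)" unfolding R_mat_def using c1_node[OF c m l1] c1_M[OF c m l1 ab(2)] by simp
    have "ereal (lamr * t + phi b - phi a) = (ereal 0 + ereal (lamr * t + phi l - phi a)) + ereal (phi b - phi l)"
      by simp
    also have "\<dots> \<le> (C_mat n P a a + mp_pow n (S_mat n P) t a l) + R_mat n P l b"
      using Ca Rl St by (intro add_mono) auto
    also have "\<dots> \<le> mp_mult n (C_mat n P) (mp_pow n (S_mat n P) t) a l + R_mat n P l b"
      by (intro add_mono MM_ge) (use ab in auto)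
    also have "\<dots> \<le> CSR n P t a b" unfolding CSR_parts[OF gP(4) mc] by (rule MM_ge[OF l1])
    finally show "ereal (lamr * t + phi b - phi a) \<le> CSR n P t a b" .
  qed
qed

lemma case1_main: "case1 \<Longrightarrow> a \<in> {1..n} \<Longrightarrow> b \<in> {1..n} \<Longrightarrow> CSR n X t a b = CSR n Y t a b"
  using c1_CSR[OF _ midX] c1_CSR[OF _ midY] by simp

end

definition arcs :: "(nat \<Rightarrow> nat \<Rightarrow> bool) \<Rightarrow> (nat \<Rightarrow> nat) \<Rightarrow> nat \<Rightarrow> bool" where
  "arcs R f L \<longleftrightarrow> (\<forall>k<L. R (f k) (f (Suc k)))"

lemma arcs_cat: "arcs R f L1 \<Longrightarrow> arcs R h L2 \<Longrightarrow> f L1 = h 0 \<Longrightarrow> arcs R (cat f L1 h) (L1 + L2)"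
  unfolding arcs_def
proof (intro allI impI)
  fix k assume a: "\<forall>k<L1. R (f k) (f (Suc k))" "\<forall>k<L2. R (h k) (h (Suc k))" "f L1 = h 0" "k < L1 + L2"
  show "R (cat f L1 h k) (cat f L1 h (Suc k))"
  proof (cases "k < L1")
    case True thus ?thesis using a by (simp add: cat_def)
  next
    case False
    hence "k - L1 < L2" "Suc k - L1 = Suc (k - L1)" using a(4) by auto
    moreover have "cat f L1 h k = h (k - L1)" using False a(3) by (auto simp: cat_def)
    moreover have "cat f L1 h (Suc k) = h (Suc k - L1)" using False by (simp add: cat_def)
    ultimately show ?thesis using a(2) by simp
  qed
qed

lemma arcs_sh: "arcs R f L \<Longrightarrow> p \<le> L \<Longrightarrow> arcs R (sh f p) (L - p)"
  unfolding arcs_def by auto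

lemma arcs_le: "arcs R f L \<Longrightarrow> L' \<le> L \<Longrightarrow> arcs R f L'"
  unfolding arcs_def by auto

lemma IVT:
  "arcs (\<lambda>x y. y \<le> x + 1) f L \<Longrightarrow> f 0 \<le> v \<Longrightarrow> v \<le> f L \<Longrightarrow> \<exists>k\<le>L. f k = v"
proof (induction L)
  case 0 thus ?case by auto
next
  case (Suc L)
  show ?case
  proof (cases "v \<le> f L")
    case True
    have "arcs (\<lambda>x y. y \<le> x + 1) f L" using arcs_le[OF Suc.prems(1)] by simp
    then obtain k where "k \<le> L" "f k = v" using Suc.IH Suc.prems(2) True by blast
    thus ?thesis by (intro exI[of _ k]) simp
  next
    case False
    have "f (Suc L) \<le> f L + 1" using Suc.prems(1) unfolding arcs_def by simp
    hence "f (Suc L) = v" using False Suc.prems(3) by simp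
    thus ?thesis by blast
  qed
qed

lemma IVT_seg:
  assumes "arcs (\<lambda>x y. y \<le> x + 1) f L" "p \<le> q" "q \<le> L" "f p \<le> v" "v \<le> f q"
  shows "\<exists>k. p \<le> k \<and> k \<le> q \<and> f k = v"
proof -
  have "arcs (\<lambda>x y. y \<le> x + 1) (sh f p) (q - p)" using arcs_sh[OF arcs_le[OF assms(1,3)] assms(2)] .
  then obtain k where "k \<le> q - p" "sh f p k = v" using IVT[of "sh f p" "q - p" v] assms by auto
  thus ?thesis using assms(2) by (intro exI[of _ "k + p"]) auto
qed

lemma cross:
  "f 0 > (g::nat) \<Longrightarrow> f L \<le> g \<Longrightarrow> \<exists>r<L. f r > g \<and> f (Suc r) \<le> g"
proof (induction L)
  case 0 thus ?case by simp
next
  case (Suc L)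
  show ?case
  proof (cases "f L \<le> g")
    case True thus ?thesis using Suc by (meson less_Suc_eq)
  next
    case False thus ?thesis using Suc.prems by auto
  qed
qed

lemma res_fun:
  fixes g :: nat
  assumes "\<forall>r<M. h (Suc r) mod g = (h r + 1) mod g"
  shows "h M mod g = (h 0 + M) mod g"
  using assms
proof (induction M)
  case 0 thus ?case by simp
next
  case (Suc M)
  hence "h M mod g = (h 0 + M) mod g" by simp
  moreover have "h (Suc M) mod g = (h M + 1) mod g" using Suc.prems by simp
  ultimately have "h (Suc M) mod g = Suc ((h 0 + M) mod g) mod g"
    by (metis Suc_eq_plus1 mod_Suc_eq)
  also have "\<dots> = Suc (h 0 + M) mod g" by (rule mod_Suc_eq)
  finally show ?case by simp
qed

lemma closed_res:
  fixes g :: nat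
  assumes "\<forall>r<M. h (Suc r) mod g = (h r + 1) mod g" "h M = h 0"
  shows "M mod g = 0"
proof -
  have "(h 0 + M) mod g = h 0 mod g" using res_fun[OF assms(1)] assms(2) by simp
  hence "g dvd (h 0 + M) - h 0" using mod_eq_dvd_iff_nat[of "h 0" "h 0 + M" g] by simp
  thus ?thesis by simp
qed

context ctx begin

lemma Yres: "Y x y \<noteq> -\<infinity> \<Longrightarrow> y mod g = (x + 1) mod g \<or> (x = n \<and> y = 1)"
proof -
  assume "Y x y \<noteq> -\<infinity>"
  hence "X x y \<noteq> -\<infinity> \<or> B x y \<noteq> -\<infinity>" by (rule Ysupp)
  thus ?thesis
  proof
    assume "X x y \<noteq> -\<infinity>"
    hence "(1 \<le> x \<and> x < n \<and> y = x + 1) \<or> (x = n \<and> y = 1) \<or> (x = g \<and> y = 1)" by (rule Xsupp)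
    moreover have "(g + 1) mod g = 1 mod g" using mod_add_self1[of g 1] by simp
    ultimately show ?thesis by auto
  next
    assume "B x y \<noteq> -\<infinity>" thus ?thesis using Bsupp by blast
  qed
qed

lemma X_nojump: "X x y \<noteq> -\<infinity> \<Longrightarrow> y \<le> x + 1"
  using Xsupp by fastforce

lemma ws_XY: "vw n X f L \<Longrightarrow> ws X f L = ws Y f L" using subm_ws[OF subXY] .
lemma vw_XY: "vw n X f L \<Longrightarrow> vw n Y f L" using subm_vw[OF subXY] .

lemma segA:
  assumes "vw n Y f L" "p \<le> q" "q \<le> L" "f p = f q"
  shows "ws Y (sh f p) (q - p) \<le> lamr * (q - p)"
proof -
  have v: "vw n Y (sh f p) (q - p)" using vw_sh[OF vw_le[OF assms(1,3)] assms(2)] .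
  have "ws A (sh f p) (q - p) \<le> lamr * (q - p)"
    using CW[OF subm_vw[OF subY v]] assms(2,4) by simp
  thus ?thesis using subm_ws[OF subY v] by simp
qed

lemma remove_seg:
  assumes v: "vw n Y f L" and a: "arcs (\<lambda>x y. y \<le> x + 1) f L" and pq: "p \<le> q" "q \<le> L" "f p = f q"
  shows "vw n Y (cat f p (sh f q)) (p + (L - q))" "arcs (\<lambda>x y. y \<le> x + 1) (cat f p (sh f q)) (p + (L - q))"
    "cat f p (sh f q) 0 = f 0" "cat f p (sh f q) (p + (L - q)) = f L"
    "ws Y f L - lamr * L \<le> ws Y (cat f p (sh f q)) (p + (L - q)) - lamr * (p + (L - q))"
proof -
  have e: "f p = sh f q 0" using pq by simp
  show "vw n Y (cat f p (sh f q)) (p + (L - q))"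
    by (rule vw_cat[OF vw_le[OF v] vw_sh[OF v pq(2)] e]) (use pq in simp)
  show "arcs (\<lambda>x y. y \<le> x + 1) (cat f p (sh f q)) (p + (L - q))"
    by (rule arcs_cat[OF arcs_le[OF a] arcs_sh[OF a pq(2)] e]) (use pq in simp)
  show "cat f p (sh f q) 0 = f 0" by simp
  show "cat f p (sh f q) (p + (L - q)) = f L" using cat_end[of f p "sh f q" "L - q", OF e] pq by simp
  have w1: "ws Y f L = ws Y f p + ws Y (sh f p) (L - p)" using ws_split[of p L Y f] pq by simp
  have w2: "ws Y (sh f p) (L - p) = ws Y (sh f p) (q - p) + ws Y (sh f q) (L - q)"
  proof -
    have "ws Y (sh f p) (L - p) = ws Y (sh f p) (q - p) + ws Y (sh (sh f p) (q - p)) (L - p - (q - p))"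
      using ws_split[of "q - p" "L - p" Y "sh f p"] pq by simp
    moreover have "sh (sh f p) (q - p) = sh f q" using pq by (auto simp: sh_def)
    moreover have "L - p - (q - p) = L - q" using pq by simp
    ultimately show ?thesis by simp
  qed
  have w3: "ws Y (cat f p (sh f q)) (p + (L - q)) = ws Y f p + ws Y (sh f q) (L - q)"
    by (rule ws_cat[of f p "sh f q" Y "L - q", OF e])
  have s: "ws Y (sh f p) (q - p) \<le> lamr * (q - p)" by (rule segA[OF v pq])
  have "lamr * real L = lamr * real (p + (L - q)) + lamr * real (q - p)" using pq
    by (simp add: algebra_simps of_nat_diff)
  thus "ws Y f L - lamr * L \<le> ws Y (cat f p (sh f q)) (p + (L - q)) - lamr * (p + (L - q))"
    using w1 w2 w3 s by linarith
qed

end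

context ctx begin

abbreviation nj :: "nat \<Rightarrow> nat \<Rightarrow> bool" where "nj x y \<equiv> y \<le> x + 1"

lemma mod_add_zero: "(b::nat) mod g = 0 \<Longrightarrow> (a + b) mod g = a mod g"
  by (metis add.right_neutral mod_add_right_eq)

lemma Jlem:
  "vw n Y f L \<Longrightarrow> \<exists>L' f'. vw n Y f' L' \<and> arcs nj f' L' \<and> f' 0 = f 0 \<and> f' L' = f L \<and>
      L' mod g = L mod g \<and> ws Y f L - lamr * L \<le> ws Y f' L' - lamr * L'"
proof (induction L)
  case 0 thus ?case by (intro exI[of _ 0] exI[of _ f]) (simp add: arcs_def)
next
  case (Suc L)
  obtain L0 f0 where f0: "vw n Y f0 L0" "arcs nj f0 L0" "f0 0 = f 0" "f0 L0 = f L"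
      "L0 mod g = L mod g" "ws Y f L - lamr * L \<le> ws Y f0 L0 - lamr * L0"
    using Suc.IH[OF vw_le[OF Suc.prems]] by auto
  define x where "x = f L"
  define y where "y = f (Suc L)"
  have Yf: "Y x y \<noteq> -\<infinity>" "x \<in> {1..n}" "y \<in> {1..n}" using Suc.prems unfolding vw_def x_def y_def by auto
  have wsS: "ws Y f (Suc L) = ws Y f L + real_of_ereal (Y x y)" using ws_Suc[of Y f L] x_def y_def by simp
  have res1: "(L0 + 1) mod g = (Suc L) mod g" using f0(5) by (metis Suc_eq_plus1 mod_Suc_eq)
  show ?case
  proof (cases "y \<le> x + 1")
    case True
    define e where "e = (\<lambda>k::nat. if k = 0 then x else y)"
    have ve: "vw n Y e 1" unfolding vw_def e_def using Yf by (auto simp: le_Suc_eq)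
    have ae: "arcs nj e 1" unfolding arcs_def e_def using True by simp
    have we: "ws Y e 1 = real_of_ereal (Y x y)" unfolding ws_def e_def by simp
    have ee: "f0 L0 = e 0" using f0(4) x_def e_def by simp
    have v: "vw n Y (cat f0 L0 e) (L0 + 1)" by (rule vw_cat[OF f0(1) ve ee])
    have a: "arcs nj (cat f0 L0 e) (L0 + 1)" by (rule arcs_cat[OF f0(2) ae ee])
    have w: "ws Y (cat f0 L0 e) (L0 + 1) = ws Y f0 L0 + ws Y e 1" by (rule ws_cat[of f0 L0 e Y 1, OF ee])
    have en: "cat f0 L0 e (L0 + 1) = f (Suc L)" using cat_end[of f0 L0 e 1, OF ee] e_def y_def by simp
    have "ws Y f (Suc L) - lamr * Suc L \<le> ws Y (cat f0 L0 e) (L0 + 1) - lamr * (L0 + 1)"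
      using wsS w we f0(6) by (simp add: algebra_simps)
    thus ?thesis using v a en f0(3) res1 by (intro exI[of _ "L0 + 1"] exI[of _ "cat f0 L0 e"]) simp
  next
    case False
    hence jx: "y > x + 1" by simp
    have "X x y = -\<infinity>" using X_nojump jx by fastforce
    hence "B x y \<noteq> -\<infinity>" using Ysupp[OF Yf(1)] by blast
    hence b: "g < x" "g < y" "y mod g = (x + 1) mod g" "B x y = A x y" using Bsupp by auto
    have YA: "Y x y = A x y" using subY Yf(1) unfolding subm_def by metis
    define b0 where "b0 = real_of_ereal (A x y)"
    have Ab: "A x y = ereal b0" using YA Yf entries b0_def by (cases "A x y") auto
    have cnd: "x > g \<and> y > x + 1 \<and> y mod g = (x + 1) mod g" using b jx by simp
    have sl: "sless (ereal (real (y - x - 1)) * mcm n A + B x y) (mp_pow n X (y - x) x y)"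
      using mp[OF bspec[OF bspec[OF ineq Yf(2)] Yf(3)] cnd] .
    have ch: "chr n X (mp_pow n X (y - x)) (y - x)" using chr_pow1 finX unfolding fin_def by blast
    have lt: "ereal (real (y - x - 1) * lamr + b0) < mp_pow n X (y - x) x y"
      using sl Ab b(4) mcm_eq unfolding sless_def by auto
    then obtain v where v: "mp_pow n X (y - x) x y = ereal v" "real (y - x - 1) * lamr + b0 < v"
      using chrD1[OF ch Yf(2,3)] by (cases "mp_pow n X (y - x) x y") auto
    obtain u where u: "vw n X u (y - x)" "u 0 = x" "u (y - x) = y" "v \<le> ws X u (y - x)"
      using chrD3[OF ch Yf(2,3), of v] v by auto
    have uY: "vw n Y u (y - x)" "ws X u (y - x) = ws Y u (y - x)" using vw_XY[OF u(1)] ws_XY[OF u(1)] by auto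
    have ua: "arcs nj u (y - x)" unfolding arcs_def using u(1) X_nojump unfolding vw_def by blast
    have ee: "f0 L0 = u 0" using f0(4) u(2) x_def by simp
    have vv: "vw n Y (cat f0 L0 u) (L0 + (y - x))" by (rule vw_cat[OF f0(1) uY(1) ee])
    have a: "arcs nj (cat f0 L0 u) (L0 + (y - x))" by (rule arcs_cat[OF f0(2) ua ee])
    have w: "ws Y (cat f0 L0 u) (L0 + (y - x)) = ws Y f0 L0 + ws Y u (y - x)"
      by (rule ws_cat[of f0 L0 u Y "y - x", OF ee])
    have en: "cat f0 L0 u (L0 + (y - x)) = f (Suc L)" using cat_end[of f0 L0 u "y - x", OF ee] u(3) y_def by simp
    have "g dvd y - (x + 1)" using b(3) mod_eq_dvd_iff_nat[of "x + 1" y g] jx by simp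
    hence "(y - (x + 1)) mod g = 0" by simp
    moreover have "y - x = 1 + (y - (x + 1))" using jx by simp
    ultimately have r1: "(y - x) mod g = 1 mod g" using mod_add_zero by metis
    have res: "(L0 + (y - x)) mod g = Suc L mod g"
    proof -
      have "(L0 + (y - x)) mod g = (L + 1) mod g" using f0(5) r1 mod_add_cong by blast
      thus ?thesis by simp
    qed
    have e1: "real (y - x - 1) * lamr = lamr * real (y - x) - lamr"
    proof -
      have r: "real (y - x - 1) = real (y - x) - 1" using jx by simp
      show ?thesis by (subst r) (simp add: algebra_simps)
    qed
    have e2: "lamr * real (L0 + (y - x)) = lamr * L0 + lamr * real (y - x)" by (simp add: distrib_left)
    have e3: "lamr * real (Suc L) = lamr * L + lamr" by (simp add: distrib_left)
    have "ws Y f (Suc L) - lamr * Suc L \<le> ws Y (cat f0 L0 u) (L0 + (y - x)) - lamr * (L0 + (y - x))"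
      using wsS YA Ab w e1 e2 e3 v(2) u(4) uY(2) f0(6) by simp
    thus ?thesis using vv a en f0(3) res by (intro exI[of _ "L0 + (y - x)"] exI[of _ "cat f0 L0 u"]) simp
  qed
qed

end

context ctx begin

lemma removeP:
  assumes P: "subm P A" and v: "vw n P f L" and pq: "p \<le> q" "q \<le> L" "f p = f q"
  shows "vw n P (cat f p (sh f q)) (p + (L - q))"
    "cat f p (sh f q) 0 = f 0" "cat f p (sh f q) (p + (L - q)) = f L"
    "ws P f L - lamr * L \<le> ws P (cat f p (sh f q)) (p + (L - q)) - lamr * (p + (L - q))"
proof -
  have e: "f p = sh f q 0" using pq by simp
  show "vw n P (cat f p (sh f q)) (p + (L - q))"
    by (rule vw_cat[OF vw_le[OF v] vw_sh[OF v pq(2)] e]) (use pq in simp)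
  show "cat f p (sh f q) 0 = f 0" by simp
  show "cat f p (sh f q) (p + (L - q)) = f L" using cat_end[of f p "sh f q" "L - q", OF e] pq by simp
  have w1: "ws P f L = ws P f p + ws P (sh f p) (L - p)" using ws_split[of p L P f] pq by simp
  have w2: "ws P (sh f p) (L - p) = ws P (sh f p) (q - p) + ws P (sh f q) (L - q)"
  proof -
    have "ws P (sh f p) (L - p) = ws P (sh f p) (q - p) + ws P (sh (sh f p) (q - p)) (L - p - (q - p))"
      using ws_split[of "q - p" "L - p" P "sh f p"] pq by simp
    moreover have "sh (sh f p) (q - p) = sh f q" using pq by (auto simp: sh_def)
    moreover have "L - p - (q - p) = L - q" using pq by simp
    ultimately show ?thesis by simp
  qed
  have w3: "ws P (cat f p (sh f q)) (p + (L - q)) = ws P f p + ws P (sh f q) (L - q)"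
    by (rule ws_cat[of f p "sh f q" P "L - q", OF e])
  have vs: "vw n P (sh f p) (q - p)" using vw_sh[OF vw_le[OF v pq(2)] pq(1)] .
  have "ws A (sh f p) (q - p) \<le> lamr * (q - p)" using CW[OF subm_vw[OF P vs]] pq by simp
  hence s: "ws P (sh f p) (q - p) \<le> lamr * (q - p)" using subm_ws[OF P vs] by simp
  have "lamr * real L = lamr * real (p + (L - q)) + lamr * real (q - p)" using pq
    by (simp add: algebra_simps of_nat_diff)
  thus "ws P f L - lamr * L \<le> ws P (cat f p (sh f q)) (p + (L - q)) - lamr * (p + (L - q))"
    using w1 w2 w3 s by linarith
qed

lemma Dlem:
  "vw n Y f L \<Longrightarrow> arcs nj f L \<Longrightarrow> f 0 \<le> g \<or> f L \<le> g \<Longrightarrow>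
   \<exists>L' f'. vw n X f' L' \<and> f' 0 = f 0 \<and> f' L' = f L \<and> L' mod g = L mod g \<and>
      ws Y f L - lamr * L \<le> ws X f' L' - lamr * L'"
proof (induction L arbitrary: f rule: less_induct)
  case (less L f)
  note v = less.prems(1) and a = less.prems(2) and e = less.prems(3)
  show ?case
  proof (cases "\<forall>k<L. X (f k) (f (Suc k)) \<noteq> -\<infinity>")
    case True
    have vX: "vw n X f L" using v True unfolding vw_def by blast
    show ?thesis using vX ws_XY[OF vX] by (intro exI[of _ L] exI[of _ f]) simp
  next
    case False
    then obtain q where q: "q < L" "X (f q) (f (Suc q)) = -\<infinity>" by blast
    define x where "x = f q"
    define y where "y = f (Suc q)"
    have Yf: "Y x y \<noteq> -\<infinity>" "x \<in> {1..n}" "y \<in> {1..n}" using v q unfolding vw_def x_def y_def by auto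
    have Bf: "B x y \<noteq> -\<infinity>" using Ysupp[OF Yf(1)] q(2) x_def y_def by auto
    hence b: "g < x" "g < y" "y mod g = (x + 1) mod g" "B x y = A x y" using Bsupp by auto
    have yx1: "y \<le> x + 1" using a q(1) unfolding arcs_def x_def y_def by auto
    have yx: "y \<le> x"
    proof (rule ccontr)
      assume "\<not> y \<le> x"
      hence "y = x + 1" using yx1 by simp
      hence "X x y = A x y" using Yf by (intro Xsupp_eq) auto
      moreover have "A x y \<noteq> -\<infinity>" using Bf b(4) by simp
      ultimately show False using q(2) x_def y_def by simp
    qed
    have resY: "f (Suc r) mod g = (f r + 1) mod g \<or> (f r = n \<and> f (Suc r) = 1)" if "r < L" for r
    proof -
      have "Y (f r) (f (Suc r)) \<noteq> -\<infinity>" using v that unfolding vw_def by auto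
      thus ?thesis by (rule Yres)
    qed
    show ?thesis
    proof (cases "f 0 \<le> g")
      case True
      define S where "S = {p. p \<le> q \<and> f p = y}"
      have "\<exists>p. 0 \<le> p \<and> p \<le> q \<and> f p = y"
        by (rule IVT_seg[OF a]) (use q(1) True b(2) yx x_def in auto)
      hence Sne: "S \<noteq> {}" unfolding S_def by auto
      have Sfin: "finite S" unfolding S_def by auto
      define p where "p = Max S"
      have "p \<in> S" unfolding p_def using Max_in[OF Sfin Sne] .
      hence p: "p \<le> q" "f p = y" unfolding S_def by auto
      have pmax: "p' \<le> p" if "p' \<le> q" "f p' = y" for p'
        unfolding p_def using Max_ge[OF Sfin, of p'] that unfolding S_def by auto
      have seg: "\<forall>r < Suc q - p. sh f p (Suc r) mod g = (sh f p r + 1) mod g"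
      proof (intro allI impI)
        fix r assume r: "r < Suc q - p"
        show "sh f p (Suc r) mod g = (sh f p r + 1) mod g"
        proof (cases "r + p = q")
          case True thus ?thesis using b(3) x_def y_def by simp
        next
          case False
          hence rq: "r + p < q" using r by auto
          show ?thesis
          proof (rule ccontr)
            assume ne: "\<not> ?thesis"
            hence nn: "f (r + p) = n \<and> f (Suc (r + p)) = 1" using resY[of "r + p"] rq q(1) by auto
            have "\<exists>s. Suc (r + p) \<le> s \<and> s \<le> q \<and> f s = y"
              by (rule IVT_seg[OF a]) (use rq q(1) yx x_def nn Yf(3) in auto)
            then obtain s where s: "Suc (r + p) \<le> s" "s \<le> q" "f s = y" by blast
            hence "s \<le> p" using pmax by blast
            thus False using s(1) by simp
          qed
        qed
      qed
      have m0: "(Suc q - p) mod g = 0" by (rule closed_res[OF seg]) (use p q(1) y_def in simp)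
      have pq: "p \<le> Suc q" "Suc q \<le> L" "f p = f (Suc q)" using p q(1) y_def by auto
      note R = remove_seg[OF v a pq]
      define L2 where "L2 = p + (L - Suc q)"
      have L2: "L2 < L" using pq p(1) unfolding L2_def by simp
      obtain L' f' where f': "vw n X f' L'" "f' 0 = cat f p (sh f (Suc q)) 0"
          "f' L' = cat f p (sh f (Suc q)) L2" "L' mod g = L2 mod g"
          "ws Y (cat f p (sh f (Suc q))) L2 - lamr * L2 \<le> ws X f' L' - lamr * L'"
        using less.IH[OF L2 R(1)[folded L2_def] R(2)[folded L2_def]] R(3) True by auto
      have "L = L2 + (Suc q - p)" using pq unfolding L2_def by simp
      hence "L mod g = L2 mod g" using mod_add_zero[OF m0] by simp
      thus ?thesis using f' R(3,4,5) unfolding L2_def[symmetric]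
        by (intro exI[of _ L'] exI[of _ f']) auto
    next
      case False
      hence fL: "f L \<le> g" using e by simp
      have ex: "\<exists>s. Suc q \<le> s \<and> s \<le> L \<and> f s = x"
      proof (cases "y = x")
        case True thus ?thesis using q(1) y_def by auto
      next
        case False
        hence yx': "y < x" using yx by simp
        have "sh f (Suc q) 0 > g" using b(2) y_def by simp
        moreover have "sh f (Suc q) (L - Suc q) \<le> g" using fL q(1) by simp
        ultimately obtain r where r: "r < L - Suc q" "sh f (Suc q) r > g" "sh f (Suc q) (Suc r) \<le> g"
          using cross[of g "sh f (Suc q)" "L - Suc q"] by blast
        define r' where "r' = r + Suc q"
        have r': "r' < L" "f r' > g" "f (Suc r') \<le> g" using r unfolding r'_def by auto
        have Yr: "Y (f r') (f (Suc r')) \<noteq> -\<infinity>" using v r'(1) unfolding vw_def by auto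
        have "f r' = n"
        proof -
          have "X (f r') (f (Suc r')) \<noteq> -\<infinity> \<or> B (f r') (f (Suc r')) \<noteq> -\<infinity>" by (rule Ysupp[OF Yr])
          thus ?thesis
          proof
            assume "X (f r') (f (Suc r')) \<noteq> -\<infinity>"
            hence "(1 \<le> f r' \<and> f r' < n \<and> f (Suc r') = f r' + 1) \<or> (f r' = n \<and> f (Suc r') = 1) \<or>
               (f r' = g \<and> f (Suc r') = 1)" by (rule Xsupp)
            thus ?thesis using r' by auto
          next
            assume "B (f r') (f (Suc r')) \<noteq> -\<infinity>" thus ?thesis using Bsupp r' by fastforce
          qed
        qed
        have "\<exists>s. Suc q \<le> s \<and> s \<le> r' \<and> f s = x"
          by (rule IVT_seg[OF a]) (use r' yx' Yf(2) y_def \<open>f r' = n\<close> r'_def in auto)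
        thus ?thesis using r'(1) by auto
      qed
      define S where "S = {s. Suc q \<le> s \<and> s \<le> L \<and> f s = x}"
      have Sne: "S \<noteq> {}" using ex unfolding S_def by auto
      have Sfin: "finite S" unfolding S_def by auto
      define s0 where "s0 = Min S"
      have "s0 \<in> S" unfolding s0_def using Min_in[OF Sfin Sne] .
      hence s0: "Suc q \<le> s0" "s0 \<le> L" "f s0 = x" unfolding S_def by auto
      have smin: "s0 \<le> s" if "Suc q \<le> s" "s \<le> L" "f s = x" for s
        unfolding s0_def using Min_le[OF Sfin, of s] that unfolding S_def by auto
      have seg: "\<forall>r < s0 - q. sh f q (Suc r) mod g = (sh f q r + 1) mod g"
      proof (intro allI impI)
        fix r assume r: "r < s0 - q"
        show "sh f q (Suc r) mod g = (sh f q r + 1) mod g"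
        proof (cases "r = 0")
          case True thus ?thesis using b(3) x_def y_def by simp
        next
          case False
          define r' where "r' = r + q"
          have r': "Suc q \<le> r'" "r' < s0" using False r unfolding r'_def by auto
          show ?thesis
          proof (rule ccontr)
            assume ne: "\<not> ?thesis"
            hence nn: "f r' = n \<and> f (Suc r') = 1" using resY[of r'] r' s0(2) unfolding r'_def by auto
            have "\<exists>s. Suc q \<le> s \<and> s \<le> r' \<and> f s = x"
              by (rule IVT_seg[OF a]) (use r' s0(2) yx Yf(2) y_def nn in auto)
            then obtain s where s: "Suc q \<le> s" "s \<le> r'" "f s = x" by blast
            hence "s0 \<le> s" using smin r' s0(2) by auto
            thus False using s(2) r'(2) by simp
          qed
        qed
      qed
      have m0: "(s0 - q) mod g = 0" by (rule closed_res[OF seg]) (use s0 x_def in simp)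
      have pq: "q \<le> s0" "s0 \<le> L" "f q = f s0" using s0 x_def by auto
      note R = remove_seg[OF v a pq]
      define L2 where "L2 = q + (L - s0)"
      have L2: "L2 < L" using pq s0(1) unfolding L2_def by simp
      obtain L' f' where f': "vw n X f' L'" "f' 0 = cat f q (sh f s0) 0"
          "f' L' = cat f q (sh f s0) L2" "L' mod g = L2 mod g"
          "ws Y (cat f q (sh f s0)) L2 - lamr * L2 \<le> ws X f' L' - lamr * L'"
        using less.IH[OF L2 R(1)[folded L2_def] R(2)[folded L2_def]] R(4) fL unfolding L2_def by auto
      have "L = L2 + (s0 - q)" using pq unfolding L2_def by simp
      hence "L mod g = L2 mod g" using mod_add_zero[OF m0] by simp
      thus ?thesis using f' R(3,4,5) unfolding L2_def[symmetric]
        by (intro exI[of _ L'] exI[of _ f']) auto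
    qed
  qed
qed

end

context ctx begin

lemma SB:
  "vw n X f (m * g) \<Longrightarrow> \<exists>m'<n. \<exists>f'. vw n X f' (m' * g) \<and> f' 0 = f 0 \<and> f' (m' * g) = f (m * g) \<and>
     ws X f (m * g) - lamr * (m * g) \<le> ws X f' (m' * g) - lamr * (m' * g)"
proof (induction m arbitrary: f rule: less_induct)
  case (less m f)
  show ?case
  proof (cases "m < n")
    case True thus ?thesis using less.prems by (intro exI[of _ m]) auto
  next
    case False
    have ninj: "\<not> inj_on (\<lambda>k. f (k * g)) {0..m}"
    proof
      assume inj: "inj_on (\<lambda>k. f (k * g)) {0..m}"
      have "(\<lambda>k. f (k * g)) ` {0..m} \<subseteq> {1..n}" using less.prems unfolding vw_def by auto
      hence "card {0..m} \<le> card {1..n}" by (rule card_inj_on_le[OF inj]) simp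
      thus False using False by simp
    qed
    then obtain i0 j0 where ij0: "i0 \<in> {0..m}" "j0 \<in> {0..m}" "i0 \<noteq> j0" "f (i0 * g) = f (j0 * g)"
      unfolding inj_on_def by blast
    define i where "i = min i0 j0"
    define j where "j = max i0 j0"
    have ij: "i < j" "j \<le> m" "f (i * g) = f (j * g)" using ij0 unfolding i_def j_def by (auto simp: min_def max_def)
    have pq: "i * g \<le> j * g" "j * g \<le> m * g" "f (i * g) = f (j * g)" using ij by auto
    note R = removeP[OF subX less.prems pq]
    define m2 where "m2 = i + (m - j)"
    have len: "i * g + (m * g - j * g) = m2 * g" unfolding m2_def using ij
      by (simp add: diff_mult_distrib add_mult_distrib)
    have m2: "m2 < m" unfolding m2_def using ij by simp
    have v2: "vw n X (cat f (i * g) (sh f (j * g))) (m2 * g)" using R(1) len by simp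
    obtain m' f' where f': "m' < n" "vw n X f' (m' * g)" "f' 0 = cat f (i * g) (sh f (j * g)) 0"
      "f' (m' * g) = cat f (i * g) (sh f (j * g)) (m2 * g)"
      "ws X (cat f (i * g) (sh f (j * g))) (m2 * g) - lamr * (m2 * g) \<le> ws X f' (m' * g) - lamr * (m' * g)"
      using less.IH[OF m2 v2] by blast
    show ?thesis using f' R(2,3,4) len by (intro exI[of _ m'] conjI exI[of _ f']) auto
  qed
qed

lemma cycX2: "\<not> case1 \<Longrightarrow> cyclicity_crit n X = g" using case2_cyc[OF _ goodX] .
lemma cycY2: "\<not> case1 \<Longrightarrow> cyclicity_crit n Y = g" using case2_cyc[OF _ goodY] .

lemma MEQ:
  assumes c: "\<not> case1" and ab: "a \<in> {1..n}" "b \<in> {1..n}" and e: "a \<le> g \<or> b \<le> g"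
  shows "M_mat n X a b = M_mat n Y a b"
proof (rule antisym)
  show "M_mat n X a b \<le> M_mat n Y a b"
  proof (rule ereal_approx_le2[OF M_ninf[OF mcmX finX ab]])
    fix x assume "ereal x \<le> M_mat n X a b"
    then obtain m f where f: "m < n" "vw n X f (m * cyclicity_crit n X)" "f 0 = a"
        "f (m * cyclicity_crit n X) = b" "x \<le> ws X f (m * cyclicity_crit n X) - lamr * (m * cyclicity_crit n X)"
      using M_wit[OF mcmX finX ab] by blast
    have fY: "vw n Y f (m * cyclicity_crit n Y)" using vw_XY[OF f(2)] cycX2[OF c] cycY2[OF c] by simp
    have "ereal (ws Y f (m * cyclicity_crit n Y) - lamr * (m * cyclicity_crit n Y)) \<le>
        M_mat n Y (f 0) (f (m * cyclicity_crit n Y))" by (rule M_ge[OF mcmY finY f(1) fY])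
    hence hM: "ereal (ws Y f (m * g) - lamr * (m * g)) \<le> M_mat n Y a b" using f cycY2[OF c] cycX2[OF c] by simp
    have "ereal x \<le> ereal (ws Y f (m * g) - lamr * (m * g))" using f(5) ws_XY[OF f(2)] cycX2[OF c] by simp
    thus "ereal x \<le> M_mat n Y a b" using hM by (rule order_trans)
  qed
  show "M_mat n Y a b \<le> M_mat n X a b"
  proof (rule ereal_approx_le2[OF M_ninf[OF mcmY finY ab]])
    fix x assume "ereal x \<le> M_mat n Y a b"
    then obtain m f where f: "m < n" "vw n Y f (m * cyclicity_crit n Y)" "f 0 = a"
        "f (m * cyclicity_crit n Y) = b" "x \<le> ws Y f (m * cyclicity_crit n Y) - lamr * (m * cyclicity_crit n Y)"
      using M_wit[OF mcmY finY ab] by blast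
    hence f: "m < n" "vw n Y f (m * g)" "f 0 = a" "f (m * g) = b" "x \<le> ws Y f (m * g) - lamr * (m * g)"
      using cycY2[OF c] by auto
    obtain L1 f1 where f1: "vw n Y f1 L1" "arcs nj f1 L1" "f1 0 = a" "f1 L1 = b" "L1 mod g = (m * g) mod g"
        "ws Y f (m * g) - lamr * (m * g) \<le> ws Y f1 L1 - lamr * L1"
      using Jlem[OF f(2)] f(3,4) by auto
    obtain L2 f2 where f2: "vw n X f2 L2" "f2 0 = a" "f2 L2 = b" "L2 mod g = L1 mod g"
        "ws Y f1 L1 - lamr * L1 \<le> ws X f2 L2 - lamr * L2"
      using Dlem[OF f1(1,2)] f1(3,4) e by auto
    have "L2 mod g = 0" using f2(4) f1(5) by simp
    hence L2: "L2 = (L2 div g) * g" by (metis add.right_neutral mult.commute div_mult_mod_eq)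
    have v2: "vw n X f2 ((L2 div g) * g)" using f2(1) L2 by simp
    obtain m3 f3 where f3: "m3 < n" "vw n X f3 (m3 * g)" "f3 0 = f2 0" "f3 (m3 * g) = f2 ((L2 div g) * g)"
        "ws X f2 ((L2 div g) * g) - lamr * ((L2 div g) * g) \<le> ws X f3 (m3 * g) - lamr * (m3 * g)"
      using SB[OF v2] by blast
    have f3': "vw n X f3 (m3 * cyclicity_crit n X)" using f3(2) cycX2[OF c] by simp
    have "ereal (ws X f3 (m3 * cyclicity_crit n X) - lamr * (m3 * cyclicity_crit n X)) \<le>
        M_mat n X (f3 0) (f3 (m3 * cyclicity_crit n X))" by (rule M_ge[OF mcmX finX f3(1) f3'])
    hence "ereal (ws X f3 (m3 * g) - lamr * (m3 * g)) \<le> M_mat n X a b"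
      using f3(3,4) f2(2,3) L2 cycX2[OF c] by simp
    moreover have "x \<le> ws X f3 (m3 * g) - lamr * (m3 * g)"
      using f(5) f1(6) f2(5) f3(5) L2 by simp
    ultimately show "ereal x \<le> M_mat n X a b" by (metis ereal_less_eq(3) order_trans)
  qed
qed

lemma case2_main:
  assumes c: "\<not> case1" and ab: "a \<in> {1..n}" "b \<in> {1..n}"
  shows "CSR n X t a b = CSR n Y t a b"
proof -
  have ca: "crit_arc n X x y \<longleftrightarrow> crit_arc n Y x y" for x y
    using case2_arc[OF c goodX] case2_arc[OF c goodY] zgarc_P_crit goodX goodY unfolding good_def by blast
  have SXY: "S_mat n X = S_mat n Y"
  proof (intro ext)
    fix x y
    show "S_mat n X x y = S_mat n Y x y"
    proof (cases "crit_arc n X x y")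
      case True
      hence "zgarc x y" using case2_arc[OF c goodX] by blast
      thus ?thesis using True ca unfolding S_mat_def using zgarc_X zgarc_Y by simp
    next
      case False thus ?thesis using ca unfolding S_mat_def by simp
    qed
  qed
  have cn: "crit_node n X k \<longleftrightarrow> crit_node n Y k" for k
    using case2_node[OF c goodX] case2_node[OF c goodY] by simp
  have CXY: "C_mat n X a k = C_mat n Y a k" if k: "k \<in> {1..n}" for k
  proof (cases "crit_node n X k")
    case True
    hence "k \<le> g" using case2_node[OF c goodX] by simp
    thus ?thesis using True cn MEQ[OF c ab(1) k] unfolding C_mat_def by simp
  next
    case False thus ?thesis using cn unfolding C_mat_def by simp
  qed
  have RXY: "R_mat n X l b = R_mat n Y l b" if l: "l \<in> {1..n}" for l
  proof (cases "crit_node n X l")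
    case True
    hence "l \<le> g" using case2_node[OF c goodX] by simp
    thus ?thesis using True cn MEQ[OF c l ab(2)] unfolding R_mat_def by simp
  next
    case False thus ?thesis using cn unfolding R_mat_def by simp
  qed
  have inner: "mp_mult n (C_mat n X) (mp_pow n (S_mat n X) t) a l = mp_mult n (C_mat n Y) (mp_pow n (S_mat n Y) t) a l" for l
    unfolding mp_mult_def SXY using CXY by (intro SUP_cong) auto
  show ?thesis
    unfolding CSR_parts[OF subX mcmX] CSR_parts[OF subY mcmY]
    unfolding mp_mult_def[of n "mp_mult n (C_mat n X) _"] mp_mult_def[of n "mp_mult n (C_mat n Y) _"]
    using inner RXY by (intro SUP_cong) auto
qed

end

theorem lemmal:
  fixes n :: nat and A :: mpmat and g :: nat
  assumes entries: "\<forall>i\<in>{1..n}. \<forall>j\<in>{1..n}. A i j \<noteq> \<infinity>"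
    and lam: "mcm n A \<noteq> -\<infinity>"
    and g_def: "g = g_crit n A"
    and A2_less: "mp_sless n (A2_mat n g A) (CSR n (A1_mat n g A) 1)"
    and sc: "crit_strongly_connected n A"
    and cyc: "(\<forall>k. 1 \<le> k \<and> k < g \<longrightarrow> crit_arc n A k (k + 1)) \<and> crit_arc n A g 1"
    and cop: "coprime g n"
    and ineq: "\<forall>i\<in>{1..n}. \<forall>j\<in>{1..n}. i > g \<and> j > i + 1 \<and> j mod g = (i + 1) mod g \<longrightarrow>
                 sless (ereal (real (j - i - 1)) * mcm n A + B1_mat g A i j)
                       (mp_pow n (A1_mat n g A) (j - i) i j)"
  shows "\<forall>t \<ge> 1. \<forall>i\<in>{1..n}. \<forall>j\<in>{1..n}.
           CSR n (A1_mat n g A) t i j = CSR n (mp_add (A1_mat n g A) (B1_mat g A)) t i j"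
proof -
  have I: "ctx n A g" unfolding ctx_def using assms by blast
  show ?thesis
  proof (intro allI impI ballI)
    fix t i j :: nat assume "1 \<le> t" "i \<in> {1..n}" "j \<in> {1..n}"
    thus "CSR n (A1_mat n g A) t i j = CSR n (mp_add (A1_mat n g A) (B1_mat g A)) t i j"
      using ctx.case1_main[OF I] ctx.case2_main[OF I] by blast
  qed
qed

end
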